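(* Let $\xi$ be an American option and let $\mathcal{Z}^{\mathrm{bd}}_0$ be given by the construction in the context. Then \[ \mathcal{Z}^{\mathrm{bd}}_0=\{x\in\mathbb{R}^d:\exists(y,\chi)\in\Phi^{\mathrm{bg}}(\xi),\ x=y_0\}, \] and for each $j=1,\ldots,d$ the bid price satisfies $\pi^{\mathrm{bg}}_j(\xi)=\max\{-x\in\mathbb{R}: xe^j\in\mathcal{Z}^{\mathrm{bd}}_0\}$ (the maximum being attained). Moreover, there exists $(y,\chi)\in\Phi^{\mathrm{bg}}(\xi)$ with $\pi^{\mathrm{bg}}_j(\xi)e^j=-y_0$.
   Context: Finite filtered probability space $(\Omega,\mathcal{F},\mathbb{P};(\mathcal{F}_t)_{t=0}^T)$, $\mathcal{F}_0$ trivial, $\mathcal{F}_T=2^\Omega$, $\mathbb{P}(\{\omega\})>0$. $\Omega_t$: atoms (nodes) of $\mathcal{F}_t$; $\mathrm{succ}\,\mu=\{\nu\in\Omega_{t+1}:\nu\subseteq\mu\}$. $\mathcal{L}_t$: $\mathcal{F}_t$-measurable $\mathbb{R}^d$-valued random variables. $d$ assets, $\mathcal{F}_t$-measurable exchange rates $\pi^{jk}_t>0$, $\pi^{jj}_t=1$. $\mathcal{K}^\mu_t$: convex cone generated by $e^1,\ldots,e^d$ and $\pi^{jk}_t(\mu)e^j-e^k$; $\mathcal{K}_t=\{x\in\mathcal{L}_t:x(\mu)\in\mathcal{K}^\mu_t\ \forall\mu\}$. Deferred solvency cone $\mathcal{Q}_t$: $z\in\mathcal{L}_t$ for which there exist $y_{t+1},\ldots,y_{T+1}$,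 $y_s\in\mathcal{L}_{s-1}$, $y_{T+1}=0$, with $z-y_{t+1}\in\mathcal{K}_t$, $y_s-y_{s+1}\in\mathcal{K}_s$ ($s>t$); $\mathcal{Q}^\mu_t=\{z(\mu):z\in\mathcal{Q}_t\}$. Trading strategies $\Phi$: $y=(y_t)_{t=0}^{T+1}$, $y_0\in\mathbb{R}^d$, $y_t\in\mathcal{L}_{t-1}$, $y_{T+1}=0$. Mixed stopping times $\mathcal{X}$: adapted $[0,1]$-valued $\chi$ with $\sum_{t=0}^T\chi_t=1$. American option: adapted $\mathbb{R}^d$-valued $\xi$. $\Phi^{\mathrm{bg}}(\xi)$: set of pairs $(y,\chi)\in\Phi\times\mathcal{X}$ with $y_t+\chi_t\xi_t-y_{t+1}\in\mathcal{K}_t$ for each $t=0,\ldots,T$. Bid price: $\pi^{\mathrm{bg}}_j(\xi)=\sup\{-x\in\mathbb{R}:\exists(y,\chi)\in\Phi^{\mathrm{bg}}(\xi),\ xe^j=y_0\}$. Construction (nodewise): $\mathcal{U}^{\mathrm{bd}\mu}_t=-\xi_t(\mu)+\mathcal{Q}^\mu_t$; at $T$: $\mathcal{Z}^{\mathrm{bd}\mu}_T=\mathcal{V}^{\mathrm{bd}\mu}_T=\mathcal{W}^{\mathrm{bd}\mu}_T=\mathcal{U}^{\mathrm{bd}\mu}_T$; for $t<T$: $\mathcal{W}^{\mathrm{bd}\mu}_t=\bigcap_{\nu\in\mathrm{succ}\,\mu}\mathcal{Z}^{\mathrm{bd}\nu}_{t+1}$, $\mathcal{V}^{\mathrm{bd}\mu}_t=\mathcal{W}^{\mathrm{bd}\mu}_t+\mathcal{Q}^\mu_t$,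 $\mathcal{Z}^{\mathrm{bd}\mu}_t=\mathrm{conv}\{\mathcal{U}^{\mathrm{bd}\mu}_t,\mathcal{V}^{\mathrm{bd}\mu}_t\}$. $\mathcal{Z}^{\mathrm{bd}}_0$ is the set at the root node. Standing assumption: no arbitrage (no $y\in\Phi$ with $y_0=0$, $y_t-y_{t+1}\in\mathcal{K}_t$ for $t<T$ and $y_T-x\in\mathcal{K}_T$ for a nonzero componentwise non-negative $x\in\mathcal{L}_T$). *)

theory Defs
  imports "HOL-Analysis.Analysis" "HOL-Library.Disjoint_Sets"
begin

text \<open>Finite filtered probability space: the sample space is a finite set Omega,
  the filtration F t is given by its atoms (a partition of Omega), t = 0..T.
  Vectors in R^d are modelled as real^'d with 'd a finite index type;
  e^j is axis j 1.  Exchange rates: rate t w j k.\<close>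

definition measurable_at :: "'w set set \<Rightarrow> ('w \<Rightarrow> 'a) \<Rightarrow> bool" where
  "measurable_at A X \<longleftrightarrow> (\<forall>\<mu>\<in>A. \<forall>\<omega>\<in>\<mu>. \<forall>\<omega>'\<in>\<mu>. X \<omega> = X \<omega>')"

definition nodeval :: "('w \<Rightarrow> 'a) \<Rightarrow> 'w set \<Rightarrow> 'a" where
  "nodeval X \<mu> = X (SOME \<omega>. \<omega> \<in> \<mu>)"

definition succ_nodes :: "(nat \<Rightarrow> 'w set set) \<Rightarrow> nat \<Rightarrow> 'w set \<Rightarrow> 'w set set" where
  "succ_nodes F t \<mu> = {\<nu> \<in> F (Suc t). \<nu> \<subseteq> \<mu>}"

definition Kcone :: "(nat \<Rightarrow> 'w \<Rightarrow> 'd \<Rightarrow> 'd \<Rightarrow> real) \<Rightarrow> nat \<Rightarrow> 'w \<Rightarrow> (real^'d::finite) set" where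
  "Kcone rate t \<omega> = convex_cone hull
     ({axis j 1 | j. True} \<union> {rate t \<omega> j k *\<^sub>R axis j 1 - axis k 1 | j k. True})"

definition Qset :: "'w set \<Rightarrow> (nat \<Rightarrow> 'w set set) \<Rightarrow> nat \<Rightarrow> (nat \<Rightarrow> 'w \<Rightarrow> 'd \<Rightarrow> 'd \<Rightarrow> real)
    \<Rightarrow> nat \<Rightarrow> ('w \<Rightarrow> real^'d::finite) set" where
  "Qset Omega F T rate t = {z. measurable_at (F t) z \<and>
     (\<exists>y :: nat \<Rightarrow> 'w \<Rightarrow> real^'d.
        (\<forall>s\<in>{t+1..T+1}. measurable_at (F (s - 1)) (y s)) \<and>
        (\<forall>\<omega>\<in>Omega. y (T+1) \<omega> = 0) \<and>
        (\<forall>\<omega>\<in>Omega. z \<omega> - y (t+1) \<omega> \<in> Kcone rate t \<omega>) \<and>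
        (\<forall>s\<in>{t+1..T}. \<forall>\<omega>\<in>Omega. y s \<omega> - y (s+1) \<omega> \<in> Kcone rate s \<omega>))}"

definition Qnode :: "'w set \<Rightarrow> (nat \<Rightarrow> 'w set set) \<Rightarrow> nat \<Rightarrow> (nat \<Rightarrow> 'w \<Rightarrow> 'd \<Rightarrow> 'd \<Rightarrow> real)
    \<Rightarrow> nat \<Rightarrow> 'w set \<Rightarrow> (real^'d::finite) set" where
  "Qnode Omega F T rate t \<mu> = {x. \<exists>z\<in>Qset Omega F T rate t. \<forall>\<omega>\<in>\<mu>. z \<omega> = x}"

definition Unode :: "'w set \<Rightarrow> (nat \<Rightarrow> 'w set set) \<Rightarrow> nat \<Rightarrow> (nat \<Rightarrow> 'w \<Rightarrow> 'd \<Rightarrow> 'd \<Rightarrow> real)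
    \<Rightarrow> (nat \<Rightarrow> 'w \<Rightarrow> real^'d::finite) \<Rightarrow> nat \<Rightarrow> 'w set \<Rightarrow> (real^'d) set" where
  "Unode Omega F T rate xi t \<mu> = (\<lambda>q. - nodeval (xi t) \<mu> + q) ` Qnode Omega F T rate t \<mu>"

text \<open>Zrec n mu is Z^{bd,mu}_{T-n} (backward recursion from time T).\<close>
primrec Zrec :: "'w set \<Rightarrow> (nat \<Rightarrow> 'w set set) \<Rightarrow> nat \<Rightarrow> (nat \<Rightarrow> 'w \<Rightarrow> 'd \<Rightarrow> 'd \<Rightarrow> real)
    \<Rightarrow> (nat \<Rightarrow> 'w \<Rightarrow> real^'d::finite) \<Rightarrow> nat \<Rightarrow> 'w set \<Rightarrow> (real^'d) set" where
  "Zrec Omega F T rate xi 0 \<mu> = Unode Omega F T rate xi T \<mu>"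
| "Zrec Omega F T rate xi (Suc n) \<mu> =
     (let t = T - Suc n;
          W = (\<Inter>\<nu>\<in>succ_nodes F t \<mu>. Zrec Omega F T rate xi n \<nu>);
          V = {w + q | w q. w \<in> W \<and> q \<in> Qnode Omega F T rate t \<mu>}
      in convex hull (Unode Omega F T rate xi t \<mu> \<union> V))"

definition Z0 :: "'w set \<Rightarrow> (nat \<Rightarrow> 'w set set) \<Rightarrow> nat \<Rightarrow> (nat \<Rightarrow> 'w \<Rightarrow> 'd \<Rightarrow> 'd \<Rightarrow> real)
    \<Rightarrow> (nat \<Rightarrow> 'w \<Rightarrow> real^'d::finite) \<Rightarrow> (real^'d) set" where
  "Z0 Omega F T rate xi = Zrec Omega F T rate xi T Omega"

definition is_strategy :: "'w set \<Rightarrow> (nat \<Rightarrow> 'w set set) \<Rightarrow> nat \<Rightarrow> (nat \<Rightarrow> 'w \<Rightarrow> real^'d::finite) \<Rightarrow> bool" where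
  "is_strategy Omega F T y \<longleftrightarrow> measurable_at (F 0) (y 0) \<and>
     (\<forall>t\<in>{1..T+1}. measurable_at (F (t - 1)) (y t)) \<and> (\<forall>\<omega>\<in>Omega. y (T+1) \<omega> = 0)"

definition init :: "'w set \<Rightarrow> (nat \<Rightarrow> 'w \<Rightarrow> 'a) \<Rightarrow> 'a" where
  "init Omega y = y 0 (SOME \<omega>. \<omega> \<in> Omega)"

definition is_mixed_stopping_time :: "'w set \<Rightarrow> (nat \<Rightarrow> 'w set set) \<Rightarrow> nat \<Rightarrow> (nat \<Rightarrow> 'w \<Rightarrow> real) \<Rightarrow> bool" where
  "is_mixed_stopping_time Omega F T ch \<longleftrightarrow>
     (\<forall>t\<le>T. measurable_at (F t) (ch t) \<and> (\<forall>\<omega>\<in>Omega. 0 \<le> ch t \<omega> \<and> ch t \<omega> \<le> 1)) \<and>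
     (\<forall>\<omega>\<in>Omega. (\<Sum>t\<le>T. ch t \<omega>) = 1)"

definition Phi_bg :: "'w set \<Rightarrow> (nat \<Rightarrow> 'w set set) \<Rightarrow> nat \<Rightarrow> (nat \<Rightarrow> 'w \<Rightarrow> 'd \<Rightarrow> 'd \<Rightarrow> real)
    \<Rightarrow> (nat \<Rightarrow> 'w \<Rightarrow> real^'d::finite) \<Rightarrow> ((nat \<Rightarrow> 'w \<Rightarrow> real^'d) \<times> (nat \<Rightarrow> 'w \<Rightarrow> real)) set" where
  "Phi_bg Omega F T rate xi = {(y, ch). is_strategy Omega F T y \<and> is_mixed_stopping_time Omega F T ch \<and>
     (\<forall>t\<le>T. \<forall>\<omega>\<in>Omega. y t \<omega> + ch t \<omega> *\<^sub>R xi t \<omega> - y (t+1) \<omega> \<in> Kcone rate t \<omega>)}"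

definition bid_price :: "'w set \<Rightarrow> (nat \<Rightarrow> 'w set set) \<Rightarrow> nat \<Rightarrow> (nat \<Rightarrow> 'w \<Rightarrow> 'd \<Rightarrow> 'd \<Rightarrow> real)
    \<Rightarrow> (nat \<Rightarrow> 'w \<Rightarrow> real^'d::finite) \<Rightarrow> 'd \<Rightarrow> real" where
  "bid_price Omega F T rate xi j =
     Sup {- x | x. \<exists>(y, ch)\<in>Phi_bg Omega F T rate xi. x *\<^sub>R axis j 1 = init Omega y}"

definition no_arbitrage :: "'w set \<Rightarrow> (nat \<Rightarrow> 'w set set) \<Rightarrow> nat \<Rightarrow> (nat \<Rightarrow> 'w \<Rightarrow> 'd \<Rightarrow> 'd \<Rightarrow> real)
    \<Rightarrow> 'd::finite itself \<Rightarrow> bool" where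
  "no_arbitrage Omega F T rate _ \<longleftrightarrow> \<not> (\<exists>(y :: nat \<Rightarrow> 'w \<Rightarrow> real^'d) (x :: 'w \<Rightarrow> real^'d).
     is_strategy Omega F T y \<and> init Omega y = 0 \<and>
     (\<forall>t<T. \<forall>\<omega>\<in>Omega. y t \<omega> - y (t+1) \<omega> \<in> Kcone rate t \<omega>) \<and>
     measurable_at (F T) x \<and> (\<forall>\<omega>\<in>Omega. \<forall>i. 0 \<le> x \<omega> $ i) \<and> (\<exists>\<omega>\<in>Omega. x \<omega> \<noteq> 0) \<and>
     (\<forall>\<omega>\<in>Omega. y T \<omega> - x \<omega> \<in> Kcone rate T \<omega>))"

end

theory Submission
  imports Defs "HOL-Analysis.Analysis"
begin

lemma convex_cone_sum_mem:
  assumes "convex_cone S" "finite I" "\<And>i. i \<in> I \<Longrightarrow> f i \<in> S"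
  shows "sum f I \<in> S"
  using assms(2,3)
proof (induction I rule: finite_induct)
  case empty then show ?case using assms(1) convex_cone_contains_0 by simp
next
  case (insert x F) then show ?case using assms(1) by (simp add: convex_cone_add)
qed

lemma cone_hull_finite_rep:
  fixes G :: "'a::real_vector set" assumes "finite G"
  shows "convex_cone hull G = {\<Sum>g\<in>G. c g *\<^sub>R g | c. \<forall>g\<in>G. 0 \<le> c g}" (is "_ = ?R")
proof
  show "convex_cone hull G \<subseteq> ?R"
  proof (rule hull_minimal)
    show "G \<subseteq> ?R"
    proof
      fix x assume x: "x \<in> G"
      have "(\<Sum>g\<in>G. (if g = x then 1 else 0) *\<^sub>R g) = (\<Sum>g\<in>G. if g = x then x else 0)"
        by (rule sum.cong) auto
      also have "\<dots> = x" using assms x by (simp add: sum.delta)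
      finally have "(\<Sum>g\<in>G. (if g = x then 1 else 0) *\<^sub>R g) = x" .
      then show "x \<in> ?R"
        by (intro CollectI exI[of _ "\<lambda>g. if g = x then 1 else 0"]) auto
    qed
    show "convex_cone ?R"
      unfolding convex_cone_iff
    proof (intro conjI ballI allI impI)
      show "0 \<in> ?R" by (rule CollectI, rule exI[of _ "\<lambda>_. 0"]) simp
    next
      fix x y assume "x \<in> ?R" "y \<in> ?R"
      then obtain c1 c2 where "x = (\<Sum>g\<in>G. c1 g *\<^sub>R g)" "\<forall>g\<in>G. 0 \<le> c1 g"
        "y = (\<Sum>g\<in>G. c2 g *\<^sub>R g)" "\<forall>g\<in>G. 0 \<le> c2 g" by blast
      then have "x + y = (\<Sum>g\<in>G. (c1 g + c2 g) *\<^sub>R g)" "\<forall>g\<in>G. 0 \<le> c1 g + c2 g"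
        by (auto simp: scaleR_add_left sum.distrib)
      then show "x + y \<in> ?R" by (intro CollectI exI[of _ "\<lambda>g. c1 g + c2 g"]) auto
    next
      fix x and a :: real assume "x \<in> ?R" "0 \<le> a"
      then obtain c1 where "x = (\<Sum>g\<in>G. c1 g *\<^sub>R g)" "\<forall>g\<in>G. 0 \<le> c1 g" by blast
      then have "a *\<^sub>R x = (\<Sum>g\<in>G. (a * c1 g) *\<^sub>R g)" "\<forall>g\<in>G. 0 \<le> a * c1 g"
        using \<open>0 \<le> a\<close> by (auto simp: scaleR_sum_right)
      then show "a *\<^sub>R x \<in> ?R" by (intro CollectI exI[of _ "\<lambda>g. a * c1 g"]) auto
    qed
  qed
next
  show "?R \<subseteq> convex_cone hull G"
  proof
    fix x assume "x \<in> ?R"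
    then obtain c where x: "x = (\<Sum>g\<in>G. c g *\<^sub>R g)" "\<forall>g\<in>G. 0 \<le> c g" by blast
    show "x \<in> convex_cone hull G"
      unfolding x(1)
      by (rule convex_cone_sum_mem[OF convex_cone_convex_cone_hull assms])
         (simp add: x(2) convex_cone_hull_mul hull_inc)
  qed
qed

definition fg :: "'a::real_vector set \<Rightarrow> bool" where
  "fg C \<longleftrightarrow> (\<exists>G. finite G \<and> C = convex_cone hull G)"

lemma fg_convex_cone: "fg C \<Longrightarrow> convex_cone C"
  unfolding fg_def using convex_cone_convex_cone_hull by blast

lemma fg_closed: fixes C :: "'a::euclidean_space set" shows "fg C \<Longrightarrow> closed C"
  unfolding fg_def using closed_convex_cone_hull by blast

lemma fg_hull: "finite G \<Longrightarrow> fg (convex_cone hull G)"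
  unfolding fg_def by blast

lemma fg_linear_image: "fg C \<Longrightarrow> linear f \<Longrightarrow> fg (f ` C)"
  unfolding fg_def by (metis convex_cone_hull_linear_image finite_imageI)

lemma fg_sum: "fg A \<Longrightarrow> fg B \<Longrightarrow> fg {x + y | x y. x \<in> A \<and> y \<in> B}"
proof -
  assume "fg A" "fg B"
  then obtain G1 G2 where "finite G1" "A = convex_cone hull G1" "finite G2" "B = convex_cone hull G2"
    unfolding fg_def by blast
  then have "{x + y | x y. x \<in> A \<and> y \<in> B} = convex_cone hull (G1 \<union> G2)"
    by (auto simp: convex_cone_hull_Un)
  then show ?thesis using \<open>finite G1\<close> \<open>finite G2\<close> by (metis fg_hull finite_UnI)
qed

lemma fm_hyperplane:
  fixes G :: "'a::real_inner set" and a :: 'a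
  assumes fin: "finite G"
  shows "convex_cone hull G \<inter> {x. a \<bullet> x = 0} =
    convex_cone hull ({g\<in>G. a \<bullet> g = 0} \<union>
      (\<lambda>(g,h). (a \<bullet> g) *\<^sub>R h - (a \<bullet> h) *\<^sub>R g) ` {(g,h). g\<in>G \<and> h\<in>G \<and> a \<bullet> g > 0 \<and> a \<bullet> h < 0})"
    (is "?L = convex_cone hull ?G'")
proof
  have ccL: "convex_cone ?L"
    using convex_cone_convex_cone_hull[of G] convex_cone_halfspace_le[of a] convex_cone_halfspace_ge[of a]
    unfolding convex_cone_iff by (auto simp: inner_add_right)
  show "convex_cone hull ?G' \<subseteq> ?L"
  proof (rule hull_minimal)
    show "convex_cone ?L" by (rule ccL)
    show "?G' \<subseteq> ?L"
    proof
      fix z assume "z \<in> ?G'"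
      then show "z \<in> ?L"
      proof
        assume "z \<in> {g\<in>G. a \<bullet> g = 0}" then show ?thesis by (auto intro: hull_inc)
      next
        assume "z \<in> (\<lambda>(g,h). (a \<bullet> g) *\<^sub>R h - (a \<bullet> h) *\<^sub>R g) ` {(g,h). g\<in>G \<and> h\<in>G \<and> a \<bullet> g > 0 \<and> a \<bullet> h < 0}"
        then obtain g h where gh: "g\<in>G" "h\<in>G" "a \<bullet> g > 0" "a \<bullet> h < 0"
          and z: "z = (a \<bullet> g) *\<^sub>R h + (- (a \<bullet> h)) *\<^sub>R g" by auto
        have "z \<in> convex_cone hull G"
          unfolding z using gh
          by (intro convex_cone_hull_add convex_cone_hull_mul) (auto intro: hull_inc)
        moreover have "a \<bullet> z = 0" unfolding z by (simp add: inner_add_right inner_diff_right)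
        ultimately show ?thesis by simp
      qed
    qed
  qed
next
  show "?L \<subseteq> convex_cone hull ?G'"
  proof
    fix x assume xL: "x \<in> ?L"
    then obtain c where x: "x = (\<Sum>g\<in>G. c g *\<^sub>R g)" and c: "\<forall>g\<in>G. 0 \<le> c g"
      using cone_hull_finite_rep[OF fin] by auto
    have ax: "a \<bullet> x = 0" using xL by simp
    define P where "P = {g\<in>G. a \<bullet> g > 0}"
    define N where "N = {g\<in>G. a \<bullet> g < 0}"
    define Z where "Z = {g\<in>G. a \<bullet> g = 0}"
    have finP: "finite P" and finN: "finite N" and finZ: "finite Z"
      using fin by (auto simp: P_def N_def Z_def)
    have Gsplit: "G = P \<union> (N \<union> Z)" by (auto simp: P_def N_def Z_def)
    have disj: "P \<inter> (N \<union> Z) = {}" "N \<inter> Z = {}" by (auto simp: P_def N_def Z_def)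
    have split: "\<And>f::'a \<Rightarrow> 'b::comm_monoid_add. sum f G = sum f P + sum f N + sum f Z"
    proof -
      fix f :: "'a \<Rightarrow> 'b::comm_monoid_add"
      have "sum f G = sum f P + sum f (N \<union> Z)"
        by (subst Gsplit, rule sum.union_disjoint) (use finP finN finZ disj in auto)
      also have "sum f (N \<union> Z) = sum f N + sum f Z"
        by (rule sum.union_disjoint) (use finP finN finZ disj in auto)
      finally show "sum f G = sum f P + sum f N + sum f Z" by (simp add: add.assoc)
    qed
    define s where "s = (\<Sum>g\<in>P. c g * (a \<bullet> g))"
    have "a \<bullet> x = (\<Sum>g\<in>G. c g * (a \<bullet> g))"
      unfolding x by (simp add: inner_sum_right)
    also have "\<dots> = s + (\<Sum>g\<in>N. c g * (a \<bullet> g)) + (\<Sum>g\<in>Z. c g * (a \<bullet> g))"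
      unfolding s_def by (rule split)
    also have "(\<Sum>g\<in>Z. c g * (a \<bullet> g)) = 0" by (simp add: Z_def)
    finally have sN: "(\<Sum>g\<in>N. c g * (a \<bullet> g)) = - s" using ax by simp
    have s0: "s \<ge> 0" unfolding s_def using c by (auto simp: P_def intro!: sum_nonneg)
    have ZinG': "\<And>g. g \<in> Z \<Longrightarrow> g \<in> ?G'" by (auto simp: Z_def)
    have xZ: "(\<Sum>g\<in>Z. c g *\<^sub>R g) \<in> convex_cone hull ?G'"
      by (rule convex_cone_sum_mem[OF convex_cone_convex_cone_hull finZ])
        (rule convex_cone_hull_mul, rule hull_inc, erule ZinG', use c in \<open>auto simp: Z_def\<close>)
    have xsplit: "x = (\<Sum>g\<in>P. c g *\<^sub>R g) + (\<Sum>g\<in>N. c g *\<^sub>R g) + (\<Sum>g\<in>Z. c g *\<^sub>R g)"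
      unfolding x by (rule split)
    show "x \<in> convex_cone hull ?G'"
    proof (cases "s = 0")
      case True
      have "\<forall>g\<in>P. c g * (a \<bullet> g) = 0"
        using True unfolding s_def
        by (subst sum_nonneg_eq_0_iff[OF finP, symmetric]) (use c in \<open>auto simp: P_def\<close>)
      then have cP: "\<forall>g\<in>P. c g = 0" by (auto simp: P_def)
      have "(\<Sum>g\<in>N. - (c g * (a \<bullet> g))) = 0" using sN True by (simp add: sum_negf)
      then have "\<forall>g\<in>N. - (c g * (a \<bullet> g)) = 0"
        by (subst sum_nonneg_eq_0_iff[OF finN, symmetric])
           (use c in \<open>auto simp: N_def intro!: mult_nonneg_nonpos\<close>)
      then have cN: "\<forall>g\<in>N. c g = 0" by (auto simp: N_def)
      have "x = (\<Sum>g\<in>Z. c g *\<^sub>R g)" using xsplit cP cN by simp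
      then show ?thesis using xZ by simp
    next
      case False
      then have spos: "s > 0" using s0 by simp
      define e where "e = (\<lambda>(g,h). (c g * c h / s) *\<^sub>R ((a \<bullet> g) *\<^sub>R h - (a \<bullet> h) *\<^sub>R g))"
      have "(\<Sum>p\<in>P \<times> N. e p) = (\<Sum>g\<in>P. \<Sum>h\<in>N. e (g,h))"
        by (subst sum.cartesian_product) (simp add: split_def)
      also have "\<dots> = (\<Sum>g\<in>P. \<Sum>h\<in>N. (c g * c h / s * (a \<bullet> g)) *\<^sub>R h)
                    - (\<Sum>g\<in>P. \<Sum>h\<in>N. (c g * c h / s * (a \<bullet> h)) *\<^sub>R g)"
        by (simp add: e_def sum_subtractf[symmetric] scaleR_diff_right algebra_simps)
      also have "(\<Sum>g\<in>P. \<Sum>h\<in>N. (c g * c h / s * (a \<bullet> g)) *\<^sub>R h) = (\<Sum>h\<in>N. c h *\<^sub>R h)"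
      proof -
        have "(\<Sum>g\<in>P. \<Sum>h\<in>N. (c g * c h / s * (a \<bullet> g)) *\<^sub>R h) =
              (\<Sum>h\<in>N. (\<Sum>g\<in>P. c g * c h / s * (a \<bullet> g)) *\<^sub>R h)"
          by (subst sum.swap) (simp add: scaleR_sum_left)
        also have "\<dots> = (\<Sum>h\<in>N. (c h * s / s) *\<^sub>R h)"
          unfolding s_def
          by (rule sum.cong, simp, rule arg_cong2[where f=scaleR], simp_all add: sum_distrib_left sum_divide_distrib algebra_simps)
        finally show ?thesis using spos by simp
      qed
      also have "(\<Sum>g\<in>P. \<Sum>h\<in>N. (c g * c h / s * (a \<bullet> h)) *\<^sub>R g) = - (\<Sum>g\<in>P. c g *\<^sub>R g)"
      proof -
        have "(\<Sum>g\<in>P. \<Sum>h\<in>N. (c g * c h / s * (a \<bullet> h)) *\<^sub>R g) =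
              (\<Sum>g\<in>P. (\<Sum>h\<in>N. c g * c h / s * (a \<bullet> h)) *\<^sub>R g)"
          by (simp add: scaleR_sum_left)
        also have "\<dots> = (\<Sum>g\<in>P. (c g * (- s) / s) *\<^sub>R g)"
          using sN
          by (intro sum.cong refl arg_cong2[where f=scaleR])
             (simp_all add: sum_distrib_left[symmetric] sum_divide_distrib[symmetric] algebra_simps)
        also have "\<dots> = - (\<Sum>g\<in>P. c g *\<^sub>R g)" using spos by (simp add: sum_negf)
        finally show ?thesis .
      qed
      finally have eq: "(\<Sum>p\<in>P \<times> N. e p) = (\<Sum>g\<in>P. c g *\<^sub>R g) + (\<Sum>g\<in>N. c g *\<^sub>R g)" by simp
      have "(\<Sum>p\<in>P \<times> N. e p) \<in> convex_cone hull ?G'"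
      proof (rule convex_cone_sum_mem[OF convex_cone_convex_cone_hull])
        show "finite (P \<times> N)" using finP finN by simp
        fix p assume "p \<in> P \<times> N"
        then obtain g h where p: "p = (g,h)" "g \<in> P" "h \<in> N" by auto
        then have gen: "(a \<bullet> g) *\<^sub>R h - (a \<bullet> h) *\<^sub>R g \<in> ?G'"
          by (auto simp: P_def N_def intro!: image_eqI[where x="(g,h)"])
        have coef: "c g * c h / s \<ge> 0" using c p spos by (auto simp: P_def N_def)
        show "e p \<in> convex_cone hull ?G'"
          using convex_cone_hull_mul[OF hull_inc[OF gen] coef] by (simp add: p e_def)
      qed
      moreover have "x = (\<Sum>p\<in>P \<times> N. e p) + (\<Sum>g\<in>Z. c g *\<^sub>R g)"
        using xsplit eq by simp
      ultimately show ?thesis using xZ by (simp add: convex_cone_hull_add)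
    qed
  qed
qed

lemma fg_hyperplane:
  fixes C :: "'a::real_inner set"
  assumes "fg C" shows "fg (C \<inter> {x. a \<bullet> x = 0})"
proof -
  obtain G where "finite G" "C = convex_cone hull G" using assms fg_def by blast
  then show ?thesis
    by (simp add: fm_hyperplane) (rule fg_hull, rule finite_UnI, simp, rule finite_imageI, rule finite_subset[of _ "G \<times> G"], auto)
qed

lemma fg_hyperplanes:
  fixes C :: "'a::real_inner set"
  assumes "finite B" "fg C" shows "fg (C \<inter> {x. \<forall>b\<in>B. b \<bullet> x = 0})"
  using assms(1)
proof (induction B rule: finite_induct)
  case empty then show ?case using assms(2) by simp
next
  case (insert b B)
  have "C \<inter> {x. \<forall>b'\<in>insert b B. b' \<bullet> x = 0} = (C \<inter> {x. \<forall>b\<in>B. b \<bullet> x = 0}) \<inter> {x. b \<bullet> x = 0}"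
    by auto
  then show ?case using fg_hyperplane[OF insert.IH] by simp
qed

lemma fg_Int:
  fixes A B :: "'a::euclidean_space set"
  assumes "fg A" "fg B" shows "fg (A \<inter> B)"
proof -
  obtain G1 G2 where G: "finite G1" "A = convex_cone hull G1" "finite G2" "B = convex_cone hull G2"
    using assms unfolding fg_def by blast
  define D where "D = convex_cone hull ((\<lambda>g. (g,g)) ` G1 \<union> (\<lambda>g. (0, -g)) ` G2)"
  have D: "D = {(p, p - q) | p q. p \<in> A \<and> q \<in> B}"
  proof -
    have l1: "linear (\<lambda>g::'a. (g,g))" by (rule bounded_linear.linear, rule bounded_linear_Pair) simp_all
    have l2: "linear (\<lambda>g::'a. (0::'a, -g))" by (rule bounded_linear.linear, rule bounded_linear_Pair, simp, rule bounded_linear_minus) simp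
    show ?thesis
      unfolding D_def convex_cone_hull_Un convex_cone_hull_linear_image[OF l1] convex_cone_hull_linear_image[OF l2]
      using G by auto
  qed
  have "fg D" unfolding D_def using G by (intro fg_hull) auto
  then have fgD: "fg (D \<inter> {z. \<forall>b\<in>(\<lambda>b. (0::'a, b)) ` Basis. b \<bullet> z = 0})"
    by (intro fg_hyperplanes) auto
  have eq: "D \<inter> {z. \<forall>b\<in>(\<lambda>b. (0::'a, b)) ` Basis. b \<bullet> z = 0} = D \<inter> {z. snd z = 0}"
  proof -
    have "(\<forall>b\<in>(\<lambda>b. (0::'a, b)) ` Basis. b \<bullet> z = 0) \<longleftrightarrow> snd z = 0" for z :: "'a \<times> 'a"
      by (cases z) (auto simp: inner_Pair, metis euclidean_all_zero_iff inner_commute)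
    then show ?thesis by auto
  qed
  have "A \<inter> B = fst ` (D \<inter> {z. snd z = 0})"
    unfolding D by force
  then show ?thesis using fg_linear_image[OF fgD linear_fst] eq by simp
qed

lemma fg_Inter:
  fixes \<C> :: "'a::euclidean_space set set"
  assumes "finite \<C>" "\<C> \<noteq> {}" "\<forall>C\<in>\<C>. fg C" shows "fg (\<Inter>\<C>)"
  using assms
proof (induction \<C> rule: finite_ne_induct)
  case (singleton x) then show ?case by simp
next
  case (insert x F) then show ?case by (simp add: fg_Int)
qed



lemma ray_hull: "convex_cone hull {v} = {a *\<^sub>R v | a. 0 \<le> a}"
  using cone_hull_finite_rep[of "{v}"] by auto

locale mkt =
  fixes Omega :: "'w set" and F :: "nat \<Rightarrow> 'w set set" and T :: nat
    and rate :: "nat \<Rightarrow> 'w \<Rightarrow> 'd::finite \<Rightarrow> 'd \<Rightarrow> real"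
    and xi :: "nat \<Rightarrow> 'w \<Rightarrow> real^'d"
  assumes fin: "finite Omega" and ne: "Omega \<noteq> {}"
    and part: "\<forall>t\<le>T. partition_on Omega (F t)"
    and refine: "\<forall>t<T. \<forall>\<nu>\<in>F (Suc t). \<exists>\<mu>\<in>F t. \<nu> \<subseteq> \<mu>"
    and F0: "F 0 = {Omega}"
    and rate_adapted: "\<forall>t\<le>T. measurable_at (F t) (rate t)"
    and xi_adapted: "\<forall>t\<le>T. measurable_at (F t) (xi t)"
begin

definition cell :: "nat \<Rightarrow> 'w \<Rightarrow> 'w set" where
  "cell t \<omega> = (SOME \<mu>. \<mu> \<in> F t \<and> \<omega> \<in> \<mu>)"

definition Kn :: "nat \<Rightarrow> 'w set \<Rightarrow> (real^'d) set" where
  "Kn t \<mu> = Kcone rate t (SOME \<omega>. \<omega> \<in> \<mu>)"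

lemma node_sub: "t \<le> T \<Longrightarrow> \<mu> \<in> F t \<Longrightarrow> \<mu> \<subseteq> Omega"
  using part unfolding partition_on_def by blast

lemma node_ne: "t \<le> T \<Longrightarrow> \<mu> \<in> F t \<Longrightarrow> \<mu> \<noteq> {}"
  using part unfolding partition_on_def by blast

lemma node_disj: "t \<le> T \<Longrightarrow> \<mu> \<in> F t \<Longrightarrow> \<mu>' \<in> F t \<Longrightarrow> \<omega> \<in> \<mu> \<Longrightarrow> \<omega> \<in> \<mu>' \<Longrightarrow> \<mu> = \<mu>'"
  using part unfolding partition_on_def disjoint_def by blast

lemma cell: "t \<le> T \<Longrightarrow> \<omega> \<in> Omega \<Longrightarrow> cell t \<omega> \<in> F t \<and> \<omega> \<in> cell t \<omega>"
proof -
  assume "t \<le> T" "\<omega> \<in> Omega"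
  then have "\<exists>\<mu>. \<mu> \<in> F t \<and> \<omega> \<in> \<mu>" using part unfolding partition_on_def by blast
  then show ?thesis unfolding cell_def by (rule someI_ex)
qed

lemma cell_eq: "t \<le> T \<Longrightarrow> \<mu> \<in> F t \<Longrightarrow> \<omega> \<in> \<mu> \<Longrightarrow> cell t \<omega> = \<mu>"
proof -
  assume a: "t \<le> T" "\<mu> \<in> F t" "\<omega> \<in> \<mu>"
  then have "\<omega> \<in> Omega" using node_sub by blast
  then have "cell t \<omega> \<in> F t" "\<omega> \<in> cell t \<omega>" using cell a(1) by auto
  then show ?thesis using node_disj[OF a(1) _ a(2) _ a(3)] by blast
qed

lemma meas_eq: "measurable_at (F t) X \<Longrightarrow> \<mu> \<in> F t \<Longrightarrow> \<omega> \<in> \<mu> \<Longrightarrow> \<omega>' \<in> \<mu> \<Longrightarrow> X \<omega> = X \<omega>'"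
  unfolding measurable_at_def by blast

lemma nodeval_eq: "t \<le> T \<Longrightarrow> measurable_at (F t) X \<Longrightarrow> \<mu> \<in> F t \<Longrightarrow> \<omega> \<in> \<mu> \<Longrightarrow> nodeval X \<mu> = X \<omega>"
proof -
  assume a: "t \<le> T" "measurable_at (F t) X" "\<mu> \<in> F t" "\<omega> \<in> \<mu>"
  have "(SOME \<omega>. \<omega> \<in> \<mu>) \<in> \<mu>" using someI[of "\<lambda>\<omega>. \<omega> \<in> \<mu>" \<omega>] a(4) .
  then show ?thesis unfolding nodeval_def using meas_eq[OF a(2) a(3) _ a(4)] by blast
qed

lemma Kn_eq: "t \<le> T \<Longrightarrow> \<mu> \<in> F t \<Longrightarrow> \<omega> \<in> \<mu> \<Longrightarrow> Kn t \<mu> = Kcone rate t \<omega>"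
proof -
  assume a: "t \<le> T" "\<mu> \<in> F t" "\<omega> \<in> \<mu>"
  have "(SOME \<omega>. \<omega> \<in> \<mu>) \<in> \<mu>" using someI[of "\<lambda>\<omega>. \<omega> \<in> \<mu>" \<omega>] a(3) .
  moreover have "measurable_at (F t) (rate t)" using rate_adapted a(1) by blast
  ultimately have "rate t (SOME \<omega>. \<omega> \<in> \<mu>) = rate t \<omega>"
    using meas_eq[of t "rate t" \<mu> _ \<omega>] a by blast
  then show ?thesis unfolding Kn_def Kcone_def by simp
qed

lemma meas_suc: "t < T \<Longrightarrow> measurable_at (F t) X \<Longrightarrow> measurable_at (F (Suc t)) X"
  unfolding measurable_at_def
proof (intro ballI)
  fix \<nu> \<omega> \<omega>' assume a: "t < T" "\<forall>\<mu>\<in>F t. \<forall>\<omega>\<in>\<mu>. \<forall>\<omega>'\<in>\<mu>. X \<omega> = X \<omega>'"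
    "\<nu> \<in> F (Suc t)" "\<omega> \<in> \<nu>" "\<omega>' \<in> \<nu>"
  obtain \<mu> where "\<mu> \<in> F t" "\<nu> \<subseteq> \<mu>" using refine a(1,3) by blast
  then show "X \<omega> = X \<omega>'" using a(2,4,5) by blast
qed

lemma meas_mono: "t \<le> s \<Longrightarrow> s \<le> T \<Longrightarrow> measurable_at (F t) X \<Longrightarrow> measurable_at (F s) X"
proof (induction s)
  case 0 then show ?case by simp
next
  case (Suc s)
  show ?case
  proof (cases "t = Suc s")
    case True then show ?thesis using Suc.prems by simp
  next
    case False
    then have "t \<le> s" "s < T" using Suc.prems by auto
    then have "measurable_at (F s) X" using Suc.IH Suc.prems(3) by simp
    then show ?thesis using meas_suc \<open>s < T\<close> by blast
  qed
qed

lemma sub_succ: "t < T \<Longrightarrow> \<nu> \<in> F (Suc t) \<Longrightarrow> \<mu> \<in> F t \<Longrightarrow> \<omega> \<in> \<nu> \<Longrightarrow> \<omega> \<in> \<mu> \<Longrightarrow> \<nu> \<subseteq> \<mu>"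
proof -
  assume a: "t < T" "\<nu> \<in> F (Suc t)" "\<mu> \<in> F t" "\<omega> \<in> \<nu>" "\<omega> \<in> \<mu>"
  then obtain \<mu>' where "\<mu>' \<in> F t" "\<nu> \<subseteq> \<mu>'" using refine by blast
  then show ?thesis using a node_disj[of t \<mu> \<mu>' \<omega>] by auto
qed

lemma cell_succ: "t < T \<Longrightarrow> \<omega> \<in> Omega \<Longrightarrow> cell (Suc t) \<omega> \<in> succ_nodes F t (cell t \<omega>)"
proof -
  assume a: "t < T" "\<omega> \<in> Omega"
  have c1: "cell (Suc t) \<omega> \<in> F (Suc t)" "\<omega> \<in> cell (Suc t) \<omega>" using cell[of "Suc t" \<omega>] a by auto
  have c2: "cell t \<omega> \<in> F t" "\<omega> \<in> cell t \<omega>" using cell[of t \<omega>] a by auto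
  have "cell (Suc t) \<omega> \<subseteq> cell t \<omega>" by (rule sub_succ[OF a(1) c1(1) c2(1) c1(2) c2(2)])
  then show ?thesis by (simp add: succ_nodes_def c1)
qed

lemma meas_cellfun: "t \<le> T \<Longrightarrow> measurable_at (F t) (\<lambda>\<omega>. f (cell t \<omega>))"
  unfolding measurable_at_def
proof (intro ballI)
  fix \<mu> \<omega> \<omega>' assume "t \<le> T" "\<mu> \<in> F t" "\<omega> \<in> \<mu>" "\<omega>' \<in> \<mu>"
  then show "f (cell t \<omega>) = f (cell t \<omega>')" using cell_eq[of t \<mu>] by simp
qed

lemma meas_cong: "t \<le> T \<Longrightarrow> measurable_at (F t) X \<Longrightarrow> (\<forall>\<omega>\<in>Omega. Y \<omega> = X \<omega>) \<Longrightarrow> measurable_at (F t) Y"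
  unfolding measurable_at_def
proof (intro ballI)
  fix \<mu> \<omega> \<omega>' assume a: "t \<le> T" "\<forall>\<mu>\<in>F t. \<forall>\<omega>\<in>\<mu>. \<forall>\<omega>'\<in>\<mu>. X \<omega> = X \<omega>'" "\<forall>\<omega>\<in>Omega. Y \<omega> = X \<omega>"
     "\<mu> \<in> F t" "\<omega> \<in> \<mu>" "\<omega>' \<in> \<mu>"
  then have "\<omega> \<in> Omega" "\<omega>' \<in> Omega" using node_sub[of t \<mu>] by auto
  then show "Y \<omega> = Y \<omega>'" using a by metis
qed

lemma meas_const: "measurable_at A (\<lambda>_. c)"
  unfolding measurable_at_def by simp

lemma succ_fin_ne: "t < T \<Longrightarrow> \<mu> \<in> F t \<Longrightarrow> finite (succ_nodes F t \<mu>) \<and> succ_nodes F t \<mu> \<noteq> {}"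
proof -
  assume a: "t < T" "\<mu> \<in> F t"
  have "succ_nodes F t \<mu> \<subseteq> Pow Omega"
    unfolding succ_nodes_def using node_sub[of "Suc t"] a by auto
  then have "finite (succ_nodes F t \<mu>)" using fin by (meson finite_Pow_iff finite_subset)
  moreover have "succ_nodes F t \<mu> \<noteq> {}"
  proof -
    obtain \<omega> where w: "\<omega> \<in> \<mu>" using node_ne[of t \<mu>] a by auto
    then have "\<omega> \<in> Omega" using node_sub[of t \<mu>] a by auto
    then have "cell (Suc t) \<omega> \<in> succ_nodes F t (cell t \<omega>)" using cell_succ a by blast
    then show ?thesis using cell_eq[of t \<mu> \<omega>] w a by auto
  qed
  ultimately show ?thesis by blast
qed

lemma Kcone_fg: "fg (Kcone rate t \<omega>)"
  unfolding Kcone_def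
proof (rule fg_hull)
  have e1: "{axis j 1 | j. True} = range (\<lambda>j. axis j (1::real))" by auto
  have e2: "{rate t \<omega> j k *\<^sub>R axis j 1 - axis k (1::real) | j k. True} =
     (\<lambda>(j,k). rate t \<omega> j k *\<^sub>R axis j 1 - axis k (1::real)) ` UNIV" by auto
  show "finite ({axis j (1::real) | j. True} \<union> {rate t \<omega> j k *\<^sub>R axis j 1 - axis k 1 | j k. True})"
    unfolding e1 e2 by simp
qed

lemma Kcone_cc: "convex_cone (Kcone rate t \<omega>)"
  using Kcone_fg fg_convex_cone by blast

lemma Kn_fg: "fg (Kn t \<mu>)"
  unfolding Kn_def by (rule Kcone_fg)

primrec Hn :: "nat \<Rightarrow> 'w set \<Rightarrow> ((real^'d) \<times> real) set" where
  "Hn 0 \<mu> = {(k - a *\<^sub>R nodeval (xi T) \<mu>, a) | k a. k \<in> Kn T \<mu> \<and> 0 \<le> a}"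
| "Hn (Suc n) \<mu> = {(w + k - c *\<^sub>R nodeval (xi (T - Suc n)) \<mu>, b + c) | w b k c.
      (w, b) \<in> (\<Inter>\<nu>\<in>succ_nodes F (T - Suc n) \<mu>. Hn n \<nu>) \<and> k \<in> Kn (T - Suc n) \<mu> \<and> 0 \<le> c}"

definition R0 :: "nat \<Rightarrow> 'w set \<Rightarrow> ((real^'d) \<times> real) set" where
  "R0 t \<mu> = {x + y | x y. x \<in> (\<lambda>k. (k, 0)) ` Kn t \<mu> \<and> y \<in> convex_cone hull {(- nodeval (xi t) \<mu>, 1)}}"

lemma R0_fg: "fg (R0 t \<mu>)"
  unfolding R0_def
proof (rule fg_sum)
  show "fg ((\<lambda>k. (k, 0::real)) ` Kn t \<mu>)"
    by (rule fg_linear_image[OF Kn_fg]) (rule bounded_linear.linear, rule bounded_linear_Pair, simp_all)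
  show "fg (convex_cone hull {(- nodeval (xi t) \<mu>, 1::real)})" by (rule fg_hull) simp
qed

lemma Hn0_eq: "Hn 0 \<mu> = R0 T \<mu>"
proof (intro set_eqI iffI)
  fix z assume "z \<in> Hn 0 \<mu>"
  then obtain k a where z: "z = (k - a *\<^sub>R nodeval (xi T) \<mu>, a)" "k \<in> Kn T \<mu>" "0 \<le> a" by auto
  have "z = (k,0) + a *\<^sub>R (- nodeval (xi T) \<mu>, 1)" using z by simp
  then show "z \<in> R0 T \<mu>" unfolding R0_def ray_hull using z by blast
next
  fix z assume "z \<in> R0 T \<mu>"
  then obtain k a where z: "z = (k,0) + a *\<^sub>R (- nodeval (xi T) \<mu>, 1)" "k \<in> Kn T \<mu>" "0 \<le> a"
    unfolding R0_def ray_hull by blast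
  then have "z = (k - a *\<^sub>R nodeval (xi T) \<mu>, a)" by simp
  note eq = this
  show "z \<in> Hn 0 \<mu>" unfolding Hn.simps
    apply (rule CollectI, rule exI[of _ k], rule exI[of _ a])
    using eq z(2,3) by blast
qed

lemma HnS_eq: "Hn (Suc n) \<mu> = {x + y | x y. x \<in> (\<Inter>\<nu>\<in>succ_nodes F (T - Suc n) \<mu>. Hn n \<nu>) \<and> y \<in> R0 (T - Suc n) \<mu>}"
proof (intro set_eqI iffI)
  fix z assume "z \<in> Hn (Suc n) \<mu>"
  then obtain w b k c where z: "z = (w + k - c *\<^sub>R nodeval (xi (T - Suc n)) \<mu>, b + c)"
    "(w, b) \<in> (\<Inter>\<nu>\<in>succ_nodes F (T - Suc n) \<mu>. Hn n \<nu>)" "k \<in> Kn (T - Suc n) \<mu>" "0 \<le> c"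
    by auto
  have "z = (w, b) + ((k,0) + c *\<^sub>R (- nodeval (xi (T - Suc n)) \<mu>, 1))" using z by simp
  moreover have "(k,0) + c *\<^sub>R (- nodeval (xi (T - Suc n)) \<mu>, 1) \<in> R0 (T - Suc n) \<mu>"
    unfolding R0_def ray_hull using z by blast
  ultimately show "z \<in> {x + y | x y. x \<in> (\<Inter>\<nu>\<in>succ_nodes F (T - Suc n) \<mu>. Hn n \<nu>) \<and> y \<in> R0 (T - Suc n) \<mu>}"
    using z(2) by blast
next
  fix z assume "z \<in> {x + y | x y. x \<in> (\<Inter>\<nu>\<in>succ_nodes F (T - Suc n) \<mu>. Hn n \<nu>) \<and> y \<in> R0 (T - Suc n) \<mu>}"
  then obtain w b y where z: "z = (w, b) + y" "(w, b) \<in> (\<Inter>\<nu>\<in>succ_nodes F (T - Suc n) \<mu>. Hn n \<nu>)"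
    "y \<in> R0 (T - Suc n) \<mu>" by auto
  then obtain k c where y: "y = (k,0) + c *\<^sub>R (- nodeval (xi (T - Suc n)) \<mu>, 1)" "k \<in> Kn (T - Suc n) \<mu>" "0 \<le> c"
    unfolding R0_def ray_hull by blast
  have eq: "z = (w + k - c *\<^sub>R nodeval (xi (T - Suc n)) \<mu>, b + c)" using z y by simp
  show "z \<in> Hn (Suc n) \<mu>" unfolding Hn.simps
    apply (rule CollectI, rule exI[of _ w], rule exI[of _ b], rule exI[of _ k], rule exI[of _ c])
    using eq z(2) y(2,3) by blast
qed

lemma Hn_fg: "n \<le> T \<Longrightarrow> \<mu> \<in> F (T - n) \<Longrightarrow> fg (Hn n \<mu>)"
proof (induction n arbitrary: \<mu>)
  case 0 then show ?case using Hn0_eq R0_fg by simp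
next
  case (Suc n)
  have t: "T - Suc n < T" "Suc (T - Suc n) = T - n" using Suc.prems by auto
  have sn: "finite (succ_nodes F (T - Suc n) \<mu>)" "succ_nodes F (T - Suc n) \<mu> \<noteq> {}"
    using succ_fin_ne[OF t(1) Suc.prems(2)] by auto
  have "\<forall>\<nu>\<in>succ_nodes F (T - Suc n) \<mu>. fg (Hn n \<nu>)"
    using Suc.IH Suc.prems t unfolding succ_nodes_def by auto
  then have "fg (\<Inter>\<nu>\<in>succ_nodes F (T - Suc n) \<mu>. Hn n \<nu>)"
    using sn by (intro fg_Inter) auto
  then show ?case unfolding HnS_eq by (intro fg_sum R0_fg) assumption
qed

lemma Hn_cc: "n \<le> T \<Longrightarrow> \<mu> \<in> F (T - n) \<Longrightarrow> convex_cone (Hn n \<mu>)"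
  using Hn_fg fg_convex_cone by blast

end

context mkt begin
definition strat :: "nat \<Rightarrow> ('w \<Rightarrow> real^'d) \<Rightarrow> ('w \<Rightarrow> real) \<Rightarrow> (nat \<Rightarrow> 'w \<Rightarrow> real^'d) \<Rightarrow> (nat \<Rightarrow> 'w \<Rightarrow> real) \<Rightarrow> bool" where
  "strat t Y A y ch \<longleftrightarrow> (\<forall>\<omega>\<in>Omega. y t \<omega> = Y \<omega>) \<and>
     (\<forall>s\<in>{Suc t..Suc T}. measurable_at (F (s - 1)) (y s)) \<and> (\<forall>\<omega>\<in>Omega. y (Suc T) \<omega> = 0) \<and>
     (\<forall>s\<in>{t..T}. measurable_at (F s) (ch s) \<and> (\<forall>\<omega>\<in>Omega. 0 \<le> ch s \<omega>)) \<and>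
     (\<forall>\<omega>\<in>Omega. (\<Sum>s=t..T. ch s \<omega>) = A \<omega>) \<and>
     (\<forall>s\<in>{t..T}. \<forall>\<omega>\<in>Omega. y s \<omega> + ch s \<omega> *\<^sub>R xi s \<omega> - y (Suc s) \<omega> \<in> Kcone rate s \<omega>)"

lemma strat_D:
  assumes "strat t Y A y ch" "\<omega> \<in> Omega"
  shows "y t \<omega> = Y \<omega>" "y (Suc T) \<omega> = 0" "(\<Sum>s=t..T. ch s \<omega>) = A \<omega>"
  using assms unfolding strat_def by blast+

lemma strat_Ds:
  assumes "strat t Y A y ch" "t \<le> s" "s \<le> T"
  shows "\<And>\<omega>. \<omega> \<in> Omega \<Longrightarrow> 0 \<le> ch s \<omega>" "measurable_at (F s) (ch s)"
    "\<And>\<omega>. \<omega> \<in> Omega \<Longrightarrow> y s \<omega> + ch s \<omega> *\<^sub>R xi s \<omega> - y (Suc s) \<omega> \<in> Kcone rate s \<omega>"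
proof -
  have s: "s \<in> {t..T}" using assms by simp
  show "\<And>\<omega>. \<omega> \<in> Omega \<Longrightarrow> 0 \<le> ch s \<omega>" "measurable_at (F s) (ch s)"
    "\<And>\<omega>. \<omega> \<in> Omega \<Longrightarrow> y s \<omega> + ch s \<omega> *\<^sub>R xi s \<omega> - y (Suc s) \<omega> \<in> Kcone rate s \<omega>"
    using assms(1) s unfolding strat_def by blast+
qed

lemma strat_D7:
  assumes "strat t Y A y ch" "t \<le> s" "s \<le> T"
  shows "measurable_at (F s) (y (Suc s))"
proof -
  have "Suc s \<in> {Suc t..Suc T}" using assms by auto
  moreover have "\<forall>s\<in>{Suc t..Suc T}. measurable_at (F (s - 1)) (y s)"
    using assms(1) unfolding strat_def by (rule conjunct1[OF conjunct2])
  ultimately have "measurable_at (F (Suc s - 1)) (y (Suc s))" by (rule bspec[rotated])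
  then show ?thesis by simp
qed

lemma meas_diff: "measurable_at G f \<Longrightarrow> measurable_at G g \<Longrightarrow> measurable_at G (\<lambda>\<omega>. f \<omega> - g \<omega>)"
  unfolding measurable_at_def by metis

lemma H_of_strat:
  "n \<le> T \<Longrightarrow> measurable_at (F (T - n)) A \<Longrightarrow> strat (T - n) Y A y ch \<Longrightarrow> \<omega> \<in> Omega
   \<Longrightarrow> (Y \<omega>, A \<omega>) \<in> Hn n (cell (T - n) \<omega>)"
proof (induction n arbitrary: Y A \<omega>)
  case 0
  let ?\<mu> = "cell T \<omega>"
  have c: "?\<mu> \<in> F T" "\<omega> \<in> ?\<mu>" using cell[of T \<omega>] 0 by auto
  have st: "strat T Y A y ch" using 0 by simp
  have s1: "y T \<omega> = Y \<omega>" "y (Suc T) \<omega> = 0" "0 \<le> ch T \<omega>" "ch T \<omega> = A \<omega>"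
    "y T \<omega> + ch T \<omega> *\<^sub>R xi T \<omega> - y (Suc T) \<omega> \<in> Kcone rate T \<omega>"
    using strat_D[OF st 0(4)] strat_Ds(1)[OF st le_refl le_refl 0(4)] strat_Ds(3)[OF st le_refl le_refl 0(4)]
    by auto
  have mxi: "measurable_at (F T) (xi T)" using xi_adapted by blast
  have nv: "nodeval (xi T) ?\<mu> = xi T \<omega>" by (rule nodeval_eq[OF le_refl mxi c(1) c(2)])
  have kn: "Kn T ?\<mu> = Kcone rate T \<omega>" by (rule Kn_eq[OF le_refl c(1) c(2)])
  define k where "k = Y \<omega> + A \<omega> *\<^sub>R xi T \<omega>"
  have k: "k \<in> Kn T ?\<mu>" using s1 kn unfolding k_def by simp
  have eq: "(Y \<omega>, A \<omega>) = (k - A \<omega> *\<^sub>R nodeval (xi T) ?\<mu>, A \<omega>)" unfolding nv k_def by simp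
  show ?case unfolding Hn.simps diff_zero
    apply (rule CollectI, rule exI[of _ k], rule exI[of _ "A \<omega>"])
    using eq k s1 by simp
next
  case (Suc m)
  define t where "t = T - Suc m"
  have tt: "T - m = Suc t" "t < T" "t \<le> T" using Suc.prems(1) unfolding t_def by auto
  let ?\<mu> = "cell t \<omega>"
  have c: "?\<mu> \<in> F t" "\<omega> \<in> ?\<mu>" using cell[of t \<omega>] Suc.prems tt by auto
  have st: "strat t Y A y ch" using Suc.prems(3) unfolding t_def .
  have my: "measurable_at (F t) (y (Suc t))" using strat_D7[OF st le_refl tt(3)] .
  have mc: "measurable_at (F t) (ch t)" using strat_Ds(2)[OF st le_refl tt(3)] .
  have mA: "measurable_at (F t) A" using Suc.prems(2) unfolding t_def .
  have sumsplit: "\<And>\<omega>. (\<Sum>s=t..T. ch s \<omega>) = ch t \<omega> + (\<Sum>s=Suc t..T. ch s \<omega>)"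
    using tt by (simp add: sum.atLeast_Suc_atMost)
  have st': "strat (T - m) (y (Suc t)) (\<lambda>\<omega>. A \<omega> - ch t \<omega>) y ch"
    unfolding tt strat_def
  proof (intro conjI)
    show "\<forall>\<omega>\<in>Omega. y (Suc t) \<omega> = y (Suc t) \<omega>" by simp
    show "\<forall>s\<in>{Suc (Suc t)..Suc T}. measurable_at (F (s - 1)) (y s)" using st unfolding strat_def by auto
    show "\<forall>\<omega>\<in>Omega. y (Suc T) \<omega> = 0" using st unfolding strat_def by auto
    show "\<forall>s\<in>{Suc t..T}. measurable_at (F s) (ch s) \<and> (\<forall>\<omega>\<in>Omega. 0 \<le> ch s \<omega>)" using st unfolding strat_def by auto
    show "\<forall>\<omega>\<in>Omega. (\<Sum>s=Suc t..T. ch s \<omega>) = A \<omega> - ch t \<omega>"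
    proof
      fix \<omega> assume "\<omega> \<in> Omega"
      then have "(\<Sum>s=t..T. ch s \<omega>) = A \<omega>" by (rule strat_D(3)[OF st])
      then show "(\<Sum>s=Suc t..T. ch s \<omega>) = A \<omega> - ch t \<omega>" using sumsplit[of \<omega>] by simp
    qed
    show "\<forall>s\<in>{Suc t..T}. \<forall>\<omega>\<in>Omega. y s \<omega> + ch s \<omega> *\<^sub>R xi s \<omega> - y (Suc s) \<omega> \<in> Kcone rate s \<omega>"
      using st unfolding strat_def by auto
  qed
  have mA': "measurable_at (F (T - m)) (\<lambda>\<omega>. A \<omega> - ch t \<omega>)"
    unfolding tt by (rule meas_suc[OF tt(2) meas_diff[OF mA mc]])
  have mlt: "m \<le> T" using Suc.prems(1) by simp
  have IH: "\<And>\<omega>'. \<omega>' \<in> Omega \<Longrightarrow> (y (Suc t) \<omega>', A \<omega>' - ch t \<omega>') \<in> Hn m (cell (Suc t) \<omega>')"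
    using Suc.IH[OF mlt mA' st'] unfolding tt by blast
  define w where "w = y (Suc t) \<omega>"
  define b where "b = A \<omega> - ch t \<omega>"
  define cc where "cc = ch t \<omega>"
  define k where "k = Y \<omega> + cc *\<^sub>R xi t \<omega> - w"
  have mxi: "measurable_at (F t) (xi t)" using xi_adapted tt by blast
  have nv: "nodeval (xi t) ?\<mu> = xi t \<omega>" by (rule nodeval_eq[OF tt(3) mxi c(1) c(2)])
  have kn: "Kn t ?\<mu> = Kcone rate t \<omega>" by (rule Kn_eq[OF tt(3) c(1) c(2)])
  have k: "k \<in> Kn t ?\<mu>"
    using strat_Ds(3)[OF st le_refl tt(3) Suc.prems(4)] strat_D(1)[OF st Suc.prems(4)]
    unfolding kn k_def cc_def w_def by simp
  have c0: "0 \<le> cc" using strat_Ds(1)[OF st le_refl tt(3) Suc.prems(4)] unfolding cc_def .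
  have wb: "(w, b) \<in> (\<Inter>\<nu>\<in>succ_nodes F t ?\<mu>. Hn m \<nu>)"
  proof
    fix \<nu> assume \<nu>: "\<nu> \<in> succ_nodes F t ?\<mu>"
    then have \<nu>F: "\<nu> \<in> F (Suc t)" "\<nu> \<subseteq> ?\<mu>" unfolding succ_nodes_def by auto
    have sT: "Suc t \<le> T" using tt by simp
    obtain \<omega>' where \<omega>': "\<omega>' \<in> \<nu>" using node_ne[OF sT \<nu>F(1)] by auto
    then have \<omega>'O: "\<omega>' \<in> Omega" using node_sub[OF sT \<nu>F(1)] by auto
    have cl: "cell (Suc t) \<omega>' = \<nu>" by (rule cell_eq[OF sT \<nu>F(1) \<omega>'])
    have \<omega>'\<mu>: "\<omega>' \<in> ?\<mu>" using \<nu>F \<omega>' by auto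
    have "y (Suc t) \<omega>' = w" using meas_eq[OF my c(1) \<omega>'\<mu> c(2)] unfolding w_def .
    moreover have "A \<omega>' - ch t \<omega>' = b"
      using meas_eq[OF mA c(1) \<omega>'\<mu> c(2)] meas_eq[OF mc c(1) \<omega>'\<mu> c(2)] unfolding b_def by simp
    ultimately show "(w, b) \<in> Hn m \<nu>" using IH[OF \<omega>'O] cl by simp
  qed
  have eq: "(Y \<omega>, A \<omega>) = (w + k - cc *\<^sub>R nodeval (xi t) ?\<mu>, b + cc)"
    unfolding nv k_def b_def cc_def by simp
  show ?case unfolding t_def[symmetric] Hn.simps
    apply (rule CollectI, rule exI[of _ w], rule exI[of _ b], rule exI[of _ k], rule exI[of _ cc])
    using eq wb k c0 by blast
qed


lemma strat_of_H:
  "n \<le> T \<Longrightarrow> measurable_at (F (T - n)) Y \<Longrightarrow> measurable_at (F (T - n)) A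
   \<Longrightarrow> (\<forall>\<omega>\<in>Omega. (Y \<omega>, A \<omega>) \<in> Hn n (cell (T - n) \<omega>)) \<Longrightarrow> \<exists>y ch. strat (T - n) Y A y ch"
proof (induction n arbitrary: Y A)
  case 0
  define y where "y = (\<lambda>s \<omega>. if s = T then Y \<omega> else (0::real^'d))"
  define ch where "ch = (\<lambda>s \<omega>. if s = T then A \<omega> else (0::real))"
  have key: "0 \<le> A \<omega> \<and> Y \<omega> + A \<omega> *\<^sub>R xi T \<omega> \<in> Kcone rate T \<omega>" if \<omega>: "\<omega> \<in> Omega" for \<omega>
  proof -
    have "(Y \<omega>, A \<omega>) \<in> Hn 0 (cell T \<omega>)" using 0(4) \<omega> by simp
    then obtain k a where ka: "Y \<omega> = k - a *\<^sub>R nodeval (xi T) (cell T \<omega>)" "A \<omega> = a"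
      "k \<in> Kn T (cell T \<omega>)" "0 \<le> a" by auto
    have c: "cell T \<omega> \<in> F T" "\<omega> \<in> cell T \<omega>" using cell[of T \<omega>] \<omega> by auto
    have mxi: "measurable_at (F T) (xi T)" using xi_adapted by blast
    have nv: "nodeval (xi T) (cell T \<omega>) = xi T \<omega>" by (rule nodeval_eq[OF le_refl mxi c(1) c(2)])
    have kn: "Kn T (cell T \<omega>) = Kcone rate T \<omega>" by (rule Kn_eq[OF le_refl c(1) c(2)])
    show ?thesis using ka nv kn by simp
  qed
  have mA: "measurable_at (F T) A" using 0(3) by simp
  have "strat T Y A y ch"
    unfolding strat_def
  proof (intro conjI)
    show "\<forall>\<omega>\<in>Omega. y T \<omega> = Y \<omega>" by (simp add: y_def)
    show "\<forall>s\<in>{Suc T..Suc T}. measurable_at (F (s - 1)) (y s)"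
      by (simp add: y_def meas_const)
    show "\<forall>\<omega>\<in>Omega. y (Suc T) \<omega> = 0" by (simp add: y_def)
    show "\<forall>s\<in>{T..T}. measurable_at (F s) (ch s) \<and> (\<forall>\<omega>\<in>Omega. 0 \<le> ch s \<omega>)"
      using mA key by (simp add: ch_def)
    show "\<forall>\<omega>\<in>Omega. (\<Sum>s=T..T. ch s \<omega>) = A \<omega>" by (simp add: ch_def)
    show "\<forall>s\<in>{T..T}. \<forall>\<omega>\<in>Omega. y s \<omega> + ch s \<omega> *\<^sub>R xi s \<omega> - y (Suc s) \<omega> \<in> Kcone rate s \<omega>"
      using key by (simp add: ch_def y_def)
  qed
  then show ?case by auto
next
  case (Suc m)
  define t where "t = T - Suc m"
  have tt: "T - m = Suc t" "t < T" "t \<le> T" "Suc t \<le> T" using Suc.prems(1) unfolding t_def by auto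
  have mY: "measurable_at (F t) Y" using Suc.prems(2) unfolding t_def .
  have mA: "measurable_at (F t) A" using Suc.prems(3) unfolding t_def .
  have ex: "\<forall>\<omega>\<in>Omega. \<exists>w b k c. Y \<omega> = w + k - c *\<^sub>R nodeval (xi t) (cell t \<omega>) \<and> A \<omega> = b + c \<and>
      (w, b) \<in> (\<Inter>\<nu>\<in>succ_nodes F t (cell t \<omega>). Hn m \<nu>) \<and> k \<in> Kn t (cell t \<omega>) \<and> 0 \<le> c"
  proof
    fix \<omega> assume "\<omega> \<in> Omega"
    then have "(Y \<omega>, A \<omega>) \<in> Hn (Suc m) (cell t \<omega>)" using Suc.prems(4) unfolding t_def by blast
    then show "\<exists>w b k c. Y \<omega> = w + k - c *\<^sub>R nodeval (xi t) (cell t \<omega>) \<and> A \<omega> = b + c \<and>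
      (w, b) \<in> (\<Inter>\<nu>\<in>succ_nodes F t (cell t \<omega>). Hn m \<nu>) \<and> k \<in> Kn t (cell t \<omega>) \<and> 0 \<le> c"
      unfolding Hn.simps t_def[symmetric] by blast
  qed
  then obtain W B K C where WBKC: "\<forall>\<omega>\<in>Omega. Y \<omega> = W \<omega> + K \<omega> - C \<omega> *\<^sub>R nodeval (xi t) (cell t \<omega>) \<and> A \<omega> = B \<omega> + C \<omega> \<and>
      (W \<omega>, B \<omega>) \<in> (\<Inter>\<nu>\<in>succ_nodes F t (cell t \<omega>). Hn m \<nu>) \<and> K \<omega> \<in> Kn t (cell t \<omega>) \<and> 0 \<le> C \<omega>"
    by metis
  define r where "r = (\<lambda>\<omega>. SOME \<omega>'. \<omega>' \<in> cell t \<omega>)"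
  have r: "r \<omega> \<in> cell t \<omega> \<and> r \<omega> \<in> Omega \<and> cell t (r \<omega>) = cell t \<omega>" if \<omega>: "\<omega> \<in> Omega" for \<omega>
  proof -
    have c: "cell t \<omega> \<in> F t" "\<omega> \<in> cell t \<omega>" using cell[OF tt(3) \<omega>] by auto
    have "r \<omega> \<in> cell t \<omega>" unfolding r_def using someI[of "\<lambda>\<omega>'. \<omega>' \<in> cell t \<omega>", OF c(2)] .
    moreover then have "r \<omega> \<in> Omega" using node_sub[OF tt(3) c(1)] by auto
    moreover have "cell t (r \<omega>) = cell t \<omega>" using cell_eq[OF tt(3) c(1) \<open>r \<omega> \<in> cell t \<omega>\<close>] .
    ultimately show ?thesis by blast
  qed
  define y1 where "y1 = (\<lambda>\<omega>. W (SOME \<omega>'. \<omega>' \<in> cell t \<omega>))"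
  define b1 where "b1 = (\<lambda>\<omega>. B (SOME \<omega>'. \<omega>' \<in> cell t \<omega>))"
  define c1 where "c1 = (\<lambda>\<omega>. C (SOME \<omega>'. \<omega>' \<in> cell t \<omega>))"
  have y1r: "y1 \<omega> = W (r \<omega>)" "b1 \<omega> = B (r \<omega>)" "c1 \<omega> = C (r \<omega>)" for \<omega>
    unfolding y1_def b1_def c1_def r_def by simp_all
  have my1: "measurable_at (F t) y1" unfolding y1_def by (rule meas_cellfun[OF tt(3)])
  have mb1: "measurable_at (F t) b1" unfolding b1_def by (rule meas_cellfun[OF tt(3)])
  have mc1: "measurable_at (F t) c1" unfolding c1_def by (rule meas_cellfun[OF tt(3)])
  have mlt: "m \<le> T" using Suc.prems(1) by simp
  have my1': "measurable_at (F (T - m)) y1" unfolding tt by (rule meas_suc[OF tt(2) my1])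
  have mb1': "measurable_at (F (T - m)) b1" unfolding tt by (rule meas_suc[OF tt(2) mb1])
  have memIH: "\<forall>\<omega>\<in>Omega. (y1 \<omega>, b1 \<omega>) \<in> Hn m (cell (T - m) \<omega>)"
  proof
    fix \<omega> assume \<omega>: "\<omega> \<in> Omega"
    have rr: "r \<omega> \<in> Omega" "cell t (r \<omega>) = cell t \<omega>" using r[OF \<omega>] by auto
    have "(W (r \<omega>), B (r \<omega>)) \<in> (\<Inter>\<nu>\<in>succ_nodes F t (cell t \<omega>). Hn m \<nu>)"
      using WBKC rr by metis
    moreover have "cell (Suc t) \<omega> \<in> succ_nodes F t (cell t \<omega>)" by (rule cell_succ[OF tt(2) \<omega>])
    ultimately show "(y1 \<omega>, b1 \<omega>) \<in> Hn m (cell (T - m) \<omega>)" unfolding tt y1r by blast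
  qed
  obtain y' ch' where st': "strat (Suc t) y1 b1 y' ch'"
    using Suc.IH[OF mlt my1' mb1' memIH] unfolding tt by blast
  define y'' where "y'' = y'(t := Y)"
  define ch'' where "ch'' = ch'(t := c1)"
  have "strat t Y A y'' ch''"
    unfolding strat_def
  proof (intro conjI)
    show "\<forall>\<omega>\<in>Omega. y'' t \<omega> = Y \<omega>" by (simp add: y''_def)
    show "\<forall>s\<in>{Suc t..Suc T}. measurable_at (F (s - 1)) (y'' s)"
    proof
      fix s assume s: "s \<in> {Suc t..Suc T}"
      show "measurable_at (F (s - 1)) (y'' s)"
      proof (cases "s = Suc t")
        case True
        have "\<forall>\<omega>\<in>Omega. y' (Suc t) \<omega> = y1 \<omega>" using strat_D(1)[OF st'] by blast
        then have "measurable_at (F t) (y' (Suc t))" by (rule meas_cong[OF tt(3) my1])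
        then show ?thesis using True by (simp add: y''_def)
      next
        case False
        then have "s \<in> {Suc (Suc t)..Suc T}" using s by auto
        moreover have "\<forall>s\<in>{Suc (Suc t)..Suc T}. measurable_at (F (s - 1)) (y' s)"
          using st' unfolding strat_def by (rule conjunct1[OF conjunct2])
        ultimately have "measurable_at (F (s - 1)) (y' s)" by (rule bspec[rotated])
        then show ?thesis using s by (simp add: y''_def)
      qed
    qed
    show "\<forall>\<omega>\<in>Omega. y'' (Suc T) \<omega> = 0" using strat_D(2)[OF st'] tt by (simp add: y''_def)
    show "\<forall>s\<in>{t..T}. measurable_at (F s) (ch'' s) \<and> (\<forall>\<omega>\<in>Omega. 0 \<le> ch'' s \<omega>)"
    proof
      fix s assume s: "s \<in> {t..T}"
      show "measurable_at (F s) (ch'' s) \<and> (\<forall>\<omega>\<in>Omega. 0 \<le> ch'' s \<omega>)"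
      proof (cases "s = t")
        case True
        have "\<forall>\<omega>\<in>Omega. 0 \<le> c1 \<omega>" using WBKC r y1r by metis
        then show ?thesis using True mc1 by (simp add: ch''_def)
      next
        case False
        then have s': "Suc t \<le> s" "s \<le> T" using s by auto
        show ?thesis using strat_Ds(1,2)[OF st' s'] False by (simp add: ch''_def)
      qed
    qed
    show "\<forall>\<omega>\<in>Omega. (\<Sum>s=t..T. ch'' s \<omega>) = A \<omega>"
    proof
      fix \<omega> assume \<omega>: "\<omega> \<in> Omega"
      have "(\<Sum>s=t..T. ch'' s \<omega>) = ch'' t \<omega> + (\<Sum>s=Suc t..T. ch'' s \<omega>)"
        using tt by (simp add: sum.atLeast_Suc_atMost)
      also have "(\<Sum>s=Suc t..T. ch'' s \<omega>) = (\<Sum>s=Suc t..T. ch' s \<omega>)"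
        by (rule sum.cong) (auto simp: ch''_def)
      also have "\<dots> = b1 \<omega>" by (rule strat_D(3)[OF st' \<omega>])
      finally have "(\<Sum>s=t..T. ch'' s \<omega>) = C (r \<omega>) + B (r \<omega>)" by (simp add: ch''_def y1r)
      also have "\<dots> = A (r \<omega>)" using WBKC r[OF \<omega>] by auto
      also have "\<dots> = A \<omega>"
        using meas_eq[OF mA, of "cell t \<omega>" "r \<omega>" \<omega>] r[OF \<omega>] cell[OF tt(3) \<omega>] by auto
      finally show "(\<Sum>s=t..T. ch'' s \<omega>) = A \<omega>" .
    qed
    show "\<forall>s\<in>{t..T}. \<forall>\<omega>\<in>Omega. y'' s \<omega> + ch'' s \<omega> *\<^sub>R xi s \<omega> - y'' (Suc s) \<omega> \<in> Kcone rate s \<omega>"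
    proof (intro ballI)
      fix s \<omega> assume s: "s \<in> {t..T}" and \<omega>: "\<omega> \<in> Omega"
      show "y'' s \<omega> + ch'' s \<omega> *\<^sub>R xi s \<omega> - y'' (Suc s) \<omega> \<in> Kcone rate s \<omega>"
      proof (cases "s = t")
        case True
        let ?\<rho> = "r \<omega>"
        have rr: "?\<rho> \<in> cell t \<omega>" "?\<rho> \<in> Omega" "cell t ?\<rho> = cell t \<omega>" using r[OF \<omega>] by auto
        have c: "cell t \<omega> \<in> F t" "\<omega> \<in> cell t \<omega>" using cell[OF tt(3) \<omega>] by auto
        have YY: "Y \<omega> = Y ?\<rho>" using meas_eq[OF mY c(1) c(2) rr(1)] .
        have W: "Y ?\<rho> = W ?\<rho> + K ?\<rho> - C ?\<rho> *\<^sub>R nodeval (xi t) (cell t \<omega>)" "K ?\<rho> \<in> Kn t (cell t \<omega>)"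
          using WBKC rr by metis+
        have mxi: "measurable_at (F t) (xi t)" using xi_adapted tt by blast
        have nv: "nodeval (xi t) (cell t \<omega>) = xi t \<omega>" by (rule nodeval_eq[OF tt(3) mxi c(1) c(2)])
        have kn: "Kn t (cell t \<omega>) = Kcone rate t \<omega>" by (rule Kn_eq[OF tt(3) c(1) c(2)])
        have y'1: "y' (Suc t) \<omega> = y1 \<omega>" using strat_D(1)[OF st' \<omega>] .
        have "y'' s \<omega> + ch'' s \<omega> *\<^sub>R xi s \<omega> - y'' (Suc s) \<omega> = K ?\<rho>"
          using True YY W(1) nv y'1 by (simp add: y''_def ch''_def y1r)
        then show ?thesis using W(2) kn True by simp
      next
        case False
        then have s': "Suc t \<le> s" "s \<le> T" using s by auto
        have "Suc s \<noteq> t" using s' by simp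
        then show ?thesis using strat_Ds(3)[OF st' s' \<omega>] False by (simp add: y''_def ch''_def)
      qed
    qed
  qed
  then show ?case unfolding t_def by blast
qed


lemma Hn_nonneg: "n \<le> T \<Longrightarrow> \<mu> \<in> F (T - n) \<Longrightarrow> (v, a) \<in> Hn n \<mu> \<Longrightarrow> 0 \<le> a"
proof (induction n arbitrary: \<mu> v a)
  case 0 then show ?case by auto
next
  case (Suc m)
  define t where "t = T - Suc m"
  have tt: "T - m = Suc t" "t < T" using Suc.prems(1) unfolding t_def by auto
  have \<mu>: "\<mu> \<in> F t" using Suc.prems(2) unfolding t_def .
  obtain w b k c where wb: "(v, a) = (w + k - c *\<^sub>R nodeval (xi t) \<mu>, b + c)"
    "(w, b) \<in> (\<Inter>\<nu>\<in>succ_nodes F t \<mu>. Hn m \<nu>)" "0 \<le> c"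
    using Suc.prems(3) unfolding Hn.simps t_def[symmetric] by blast
  obtain \<nu> where \<nu>: "\<nu> \<in> succ_nodes F t \<mu>" using succ_fin_ne[OF tt(2) \<mu>] by blast
  then have "\<nu> \<in> F (T - m)" unfolding tt succ_nodes_def by auto
  moreover have "(w, b) \<in> Hn m \<nu>" using wb(2) \<nu> by blast
  ultimately have "0 \<le> b" using Suc.IH[of \<nu> w b] Suc.prems(1) by auto
  then show ?case using wb by simp
qed

lemma Qnode_char:
  assumes t: "t \<le> T" and \<mu>: "\<mu> \<in> F t"
  shows "Qnode Omega F T rate t \<mu> = {q. (q, 0) \<in> Hn (T - t) \<mu>}"
proof (intro set_eqI iffI)
  have Tt: "T - (T - t) = t" using t by simp
  fix x assume "x \<in> Qnode Omega F T rate t \<mu>"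
  then obtain z where zQ: "z \<in> Qset Omega F T rate t" and zx: "\<forall>\<omega>\<in>\<mu>. z \<omega> = x"
    unfolding Qnode_def by blast
  from zQ obtain y where mz: "measurable_at (F t) z"
    and my: "\<forall>s\<in>{t+1..T+1}. measurable_at (F (s - 1)) (y s)"
    and y0: "\<forall>\<omega>\<in>Omega. y (T+1) \<omega> = 0"
    and yK1: "\<forall>\<omega>\<in>Omega. z \<omega> - y (t+1) \<omega> \<in> Kcone rate t \<omega>"
    and yK: "\<forall>s\<in>{t+1..T}. \<forall>\<omega>\<in>Omega. y s \<omega> - y (s+1) \<omega> \<in> Kcone rate s \<omega>"
    unfolding Qset_def by blast
  define y'' where "y'' = y(t := z)"
  have st: "strat t z (\<lambda>_. 0) y'' (\<lambda>_ _. 0)"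
    unfolding strat_def
  proof (intro conjI)
    show "\<forall>\<omega>\<in>Omega. y'' t \<omega> = z \<omega>" by (simp add: y''_def)
    show "\<forall>s\<in>{Suc t..Suc T}. measurable_at (F (s - 1)) (y'' s)" using my by (simp add: y''_def)
    show "\<forall>\<omega>\<in>Omega. y'' (Suc T) \<omega> = 0" using y0 t by (simp add: y''_def)
    show "\<forall>s\<in>{t..T}. measurable_at (F s) (\<lambda>_. 0::real) \<and> (\<forall>\<omega>\<in>Omega. (0::real) \<le> 0)"
      by (simp add: meas_const)
    show "\<forall>\<omega>\<in>Omega. (\<Sum>s=t..T. (0::real)) = 0" by simp
    show "\<forall>s\<in>{t..T}. \<forall>\<omega>\<in>Omega. y'' s \<omega> + 0 *\<^sub>R xi s \<omega> - y'' (Suc s) \<omega> \<in> Kcone rate s \<omega>"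
    proof (intro ballI)
      fix s \<omega> assume s: "s \<in> {t..T}" and \<omega>: "\<omega> \<in> Omega"
      show "y'' s \<omega> + 0 *\<^sub>R xi s \<omega> - y'' (Suc s) \<omega> \<in> Kcone rate s \<omega>"
      proof (cases "s = t")
        case True then show ?thesis using yK1 \<omega> by (simp add: y''_def)
      next
        case False
        then have "s \<in> {t+1..T}" "Suc s \<noteq> t" using s by auto
        then show ?thesis using yK \<omega> False by (simp add: y''_def)
      qed
    qed
  qed
  obtain \<omega> where \<omega>: "\<omega> \<in> \<mu>" using node_ne[OF t \<mu>] by auto
  have \<omega>O: "\<omega> \<in> Omega" using node_sub[OF t \<mu>] \<omega> by auto
  have "(z \<omega>, 0) \<in> Hn (T - t) (cell (T - (T - t)) \<omega>)"
    by (rule H_of_strat[of "T - t" "\<lambda>_. 0" z y'' "\<lambda>_ _. 0" \<omega>]) (simp_all add: Tt st \<omega>O meas_const)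
  then show "x \<in> {q. (q, 0) \<in> Hn (T - t) \<mu>}" using zx \<omega> cell_eq[OF t \<mu> \<omega>] unfolding Tt by auto
next
  have Tt: "T - (T - t) = t" using t by simp
  fix q assume "q \<in> {q. (q, 0) \<in> Hn (T - t) \<mu>}"
  then have q: "(q, 0) \<in> Hn (T - t) \<mu>" by simp
  define Y where "Y = (\<lambda>\<omega>. if \<omega> \<in> \<mu> then q else 0)"
  have mY: "measurable_at (F t) Y"
    unfolding measurable_at_def
  proof (intro ballI)
    fix \<nu> \<omega> \<omega>' assume "\<nu> \<in> F t" "\<omega> \<in> \<nu>" "\<omega>' \<in> \<nu>"
    then show "Y \<omega> = Y \<omega>'" unfolding Y_def using node_disj[OF t \<mu>, of \<nu>] by (cases "\<nu> = \<mu>") auto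
  qed
  have mem: "\<forall>\<omega>\<in>Omega. (Y \<omega>, 0) \<in> Hn (T - t) (cell (T - (T - t)) \<omega>)"
  proof
    fix \<omega> assume \<omega>: "\<omega> \<in> Omega"
    show "(Y \<omega>, 0) \<in> Hn (T - t) (cell (T - (T - t)) \<omega>)"
    proof (cases "\<omega> \<in> \<mu>")
      case True then show ?thesis using q cell_eq[OF t \<mu> True] unfolding Tt Y_def by simp
    next
      case False
      have "cell t \<omega> \<in> F t" using cell[OF t \<omega>] by auto
      then have "convex_cone (Hn (T - t) (cell t \<omega>))" using Hn_cc[of "T - t"] unfolding Tt by simp
      then have "(0, 0) \<in> Hn (T - t) (cell t \<omega>)"
        using convex_cone_contains_0 by (metis zero_prod_def)
      then show ?thesis using False unfolding Tt Y_def by simp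
    qed
  qed
  obtain y ch where st: "strat t Y (\<lambda>_. 0) y ch"
    using strat_of_H[of "T - t" Y "\<lambda>_. 0", OF _ _ meas_const] mY mem t unfolding Tt by auto
  have ch0: "ch s \<omega> = 0" if "\<omega> \<in> Omega" "t \<le> s" "s \<le> T" for s \<omega>
  proof -
    have "(\<Sum>s=t..T. ch s \<omega>) = 0" using strat_D(3)[OF st that(1)] by simp
    moreover have "\<forall>s\<in>{t..T}. 0 \<le> ch s \<omega>" using strat_Ds(1)[OF st _ _ that(1)] by auto
    ultimately have "\<forall>s\<in>{t..T}. ch s \<omega> = 0" using sum_nonneg_eq_0_iff[of "{t..T}" "\<lambda>s. ch s \<omega>"] by auto
    then show ?thesis using that by auto
  qed
  have "Y \<in> Qset Omega F T rate t"
    unfolding Qset_def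
  proof (intro CollectI conjI exI[of _ y])
    show "measurable_at (F t) Y" by (rule mY)
    show "\<forall>s\<in>{t + 1..T + 1}. measurable_at (F (s - 1)) (y s)"
      using st unfolding strat_def by simp
    show "\<forall>\<omega>\<in>Omega. y (T + 1) \<omega> = 0" using strat_D(2)[OF st] by simp
    show "\<forall>\<omega>\<in>Omega. Y \<omega> - y (t + 1) \<omega> \<in> Kcone rate t \<omega>"
      using strat_Ds(3)[OF st le_refl t] strat_D(1)[OF st] ch0 t by simp
    show "\<forall>s\<in>{t + 1..T}. \<forall>\<omega>\<in>Omega. y s \<omega> - y (s + 1) \<omega> \<in> Kcone rate s \<omega>"
    proof (intro ballI)
      fix s \<omega> assume s: "s \<in> {t+1..T}" and \<omega>: "\<omega> \<in> Omega"
      then have s': "t \<le> s" "s \<le> T" by auto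
      show "y s \<omega> - y (s + 1) \<omega> \<in> Kcone rate s \<omega>"
        using strat_Ds(3)[OF st s' \<omega>] ch0[OF \<omega> s'] by simp
    qed
  qed
  moreover have "\<forall>\<omega>\<in>\<mu>. Y \<omega> = q" unfolding Y_def by simp
  ultimately show "q \<in> Qnode Omega F T rate t \<mu>" unfolding Qnode_def by blast
qed


lemma Hn_zero: "n \<le> T \<Longrightarrow> \<mu> \<in> F (T - n) \<Longrightarrow> (0, 0) \<in> Hn n \<mu>"
  using Hn_cc convex_cone_contains_0 by (metis zero_prod_def)

lemma Z_char: "n \<le> T \<Longrightarrow> \<mu> \<in> F (T - n) \<Longrightarrow> Zrec Omega F T rate xi n \<mu> = {v. (v, 1) \<in> Hn n \<mu>}"
proof (induction n arbitrary: \<mu>)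
  case 0
  let ?x = "nodeval (xi T) \<mu>"
  have \<mu>: "\<mu> \<in> F T" using 0 by simp
  have Q: "Qnode Omega F T rate T \<mu> = {q. (q, 0) \<in> Hn 0 \<mu>}" using Qnode_char[OF le_refl \<mu>] by simp
  have Q2: "(q, 0) \<in> Hn 0 \<mu> \<longleftrightarrow> q \<in> Kn T \<mu>" for q
  proof
    assume "(q, 0) \<in> Hn 0 \<mu>" then show "q \<in> Kn T \<mu>" by auto
  next
    assume "q \<in> Kn T \<mu>"
    then show "(q, 0) \<in> Hn 0 \<mu>" unfolding Hn.simps
      by (intro CollectI exI[of _ q] exI[of _ "0::real"]) simp
  qed
  show ?case
  proof (intro set_eqI iffI)
    fix v assume "v \<in> Zrec Omega F T rate xi 0 \<mu>"
    then obtain q where q: "v = - ?x + q" "q \<in> Kn T \<mu>" unfolding Zrec.simps Unode_def Q Q2 by auto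
    show "v \<in> {v. (v, 1) \<in> Hn 0 \<mu>}" unfolding Hn.simps
      by (intro CollectI exI[of _ q] exI[of _ "1::real"]) (simp add: q)
  next
    fix v assume "v \<in> {v. (v, 1) \<in> Hn 0 \<mu>}"
    then obtain k where k: "v = k - ?x" "k \<in> Kn T \<mu>" by auto
    then have "v = - ?x + k" by simp
    then show "v \<in> Zrec Omega F T rate xi 0 \<mu>" unfolding Zrec.simps Unode_def Q Q2 using k(2) by blast
  qed
next
  case (Suc m)
  define t where "t = T - Suc m"
  have tt: "T - m = Suc t" "t < T" "t \<le> T" "T - t = Suc m" using Suc.prems(1) unfolding t_def by auto
  have \<mu>: "\<mu> \<in> F t" using Suc.prems(2) unfolding t_def .
  let ?x = "nodeval (xi t) \<mu>"
  let ?H = "Hn (Suc m) \<mu>"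
  let ?S = "succ_nodes F t \<mu>"
  let ?W' = "\<Inter>\<nu>\<in>?S. Hn m \<nu>"
  have ccH: "convex_cone ?H" using Hn_cc[of "Suc m" \<mu>] Suc.prems by simp
  have Sn: "\<nu> \<in> F (T - m)" if "\<nu> \<in> ?S" for \<nu> using that unfolding tt succ_nodes_def by auto
  have mlt: "m \<le> T" using Suc.prems by simp
  have W'0: "(0, 0) \<in> ?W'" using Hn_zero[OF mlt] Sn by blast
  have ccW': "convex_cone (Hn m \<nu>)" if "\<nu> \<in> ?S" for \<nu> using Hn_cc[OF mlt Sn[OF that]] .
  have Q: "Qnode Omega F T rate t \<mu> = {q. (q, 0) \<in> ?H}" using Qnode_char[OF tt(3) \<mu>] tt by simp
  have W: "(\<Inter>\<nu>\<in>?S. Zrec Omega F T rate xi m \<nu>) = {w. (w, 1) \<in> ?W'}"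
    using Suc.IH[OF mlt Sn] by auto
  have Z: "Zrec Omega F T rate xi (Suc m) \<mu> = convex hull ((\<lambda>q. - ?x + q) ` {q. (q, 0) \<in> ?H} \<union>
      {w + q | w q. w \<in> {w. (w, 1) \<in> ?W'} \<and> q \<in> {q. (q, 0) \<in> ?H}})"
    unfolding Zrec.simps Let_def t_def[symmetric] Unode_def Q W by simp
  have Hmem: "(w + k - c *\<^sub>R ?x, b + c) \<in> ?H" if "(w, b) \<in> ?W'" "k \<in> Kn t \<mu>" "0 \<le> c" for w b k c
    unfolding Hn.simps t_def[symmetric]
    by (intro CollectI exI[of _ w] exI[of _ b] exI[of _ k] exI[of _ c]) (use that in simp)
  have K0: "0 \<in> Kn t \<mu>" using convex_cone_contains_0[OF Kn_fg[THEN fg_convex_cone]] .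
  have "(0 + 0 - 1 *\<^sub>R ?x, 0 + 1) \<in> ?H" by (rule Hmem[OF W'0 K0]) simp
  then have xi1: "(- ?x, 1) \<in> ?H" by simp
  have W'H: "(w, b) \<in> ?H" if "(w, b) \<in> ?W'" for w b
    using Hmem[OF that _ order.refl, of 0] convex_cone_contains_0[OF Kn_fg[THEN fg_convex_cone]] by simp
  have KH: "(k, 0) \<in> ?H" if "k \<in> Kn t \<mu>" for k
    using Hmem[OF W'0 that order.refl] by simp
  have addH: "(u1 + u2, a1 + a2) \<in> ?H" if "(u1, a1) \<in> ?H" "(u2, a2) \<in> ?H" for u1 u2 a1 a2
    using convex_cone_add[OF ccH that] by simp
  have sclH: "(c *\<^sub>R u, c * a) \<in> ?H" if "(u, a) \<in> ?H" "0 \<le> c" for u a c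
    using convex_cone_scaleR[OF ccH that(2) that(1)] by simp
  show ?case unfolding Z
  proof (intro set_eqI iffI)
    fix v assume v: "v \<in> convex hull ((\<lambda>q. - ?x + q) ` {q. (q, 0) \<in> ?H} \<union>
      {w + q | w q. w \<in> {w. (w, 1) \<in> ?W'} \<and> q \<in> {q. (q, 0) \<in> ?H}})"
    have "convex {v. (v, 1) \<in> ?H}"
      unfolding convex_def
    proof (intro allI ballI impI)
      fix x y and u v :: real assume "x \<in> {v. (v, 1) \<in> ?H}" "y \<in> {v. (v, 1) \<in> ?H}" "0 \<le> u" "0 \<le> v" "u + v = 1"
      then show "u *\<^sub>R x + v *\<^sub>R y \<in> {v. (v, 1) \<in> ?H}"
        using addH[OF sclH sclH, of x 1 u y 1 v] by (simp del: Hn.simps)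
    qed
    moreover have "(\<lambda>q. - ?x + q) ` {q. (q, 0) \<in> ?H} \<union>
      {w + q | w q. w \<in> {w. (w, 1) \<in> ?W'} \<and> q \<in> {q. (q, 0) \<in> ?H}} \<subseteq> {v. (v, 1) \<in> ?H}"
    proof
      fix z assume "z \<in> (\<lambda>q. - ?x + q) ` {q. (q, 0) \<in> ?H} \<union>
        {w + q | w q. w \<in> {w. (w, 1) \<in> ?W'} \<and> q \<in> {q. (q, 0) \<in> ?H}}"
      then show "z \<in> {v. (v, 1) \<in> ?H}"
      proof
        assume "z \<in> (\<lambda>q. - ?x + q) ` {q. (q, 0) \<in> ?H}"
        then obtain q where "z = - ?x + q" "(q, 0) \<in> ?H" by blast
        then show ?thesis using addH[OF xi1, of q 0] by (simp del: Hn.simps)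
      next
        assume "z \<in> {w + q | w q. w \<in> {w. (w, 1) \<in> ?W'} \<and> q \<in> {q. (q, 0) \<in> ?H}}"
        then obtain w q where "z = w + q" "(w, 1) \<in> ?W'" "(q, 0) \<in> ?H" by blast
        then show ?thesis using addH[OF W'H, of w 1 q 0] by (simp del: Hn.simps)
      qed
    qed
    ultimately show "v \<in> {v. (v, 1) \<in> ?H}" using v hull_minimal[of _ _ convex] by blast
  next
    fix v assume "v \<in> {v. (v, 1) \<in> ?H}"
    then obtain w b k c where wb: "v = w + k - c *\<^sub>R ?x" "1 = b + c" "(w, b) \<in> ?W'" "k \<in> Kn t \<mu>" "0 \<le> c"
      unfolding Hn.simps t_def[symmetric] by blast
    obtain \<nu> where \<nu>: "\<nu> \<in> ?S" using succ_fin_ne[OF tt(2) \<mu>] by blast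
    have b0: "0 \<le> b" using Hn_nonneg[OF mlt Sn[OF \<nu>], of w b] wb(3) \<nu> by blast
    let ?U = "(\<lambda>q. - ?x + q) ` {q. (q, 0) \<in> ?H}"
    let ?V = "{w + q | w q. w \<in> {w. (w, 1) \<in> ?W'} \<and> q \<in> {q. (q, 0) \<in> ?H}}"
    have xU: "- ?x \<in> ?U" using Hn_zero[of "Suc m" \<mu>] Suc.prems by (auto intro!: image_eqI[of _ _ 0])
    show "v \<in> convex hull (?U \<union> ?V)"
    proof (cases "b = 0")
      case True
      then have c1: "c = 1" using wb by simp
      have "(w + k, 0) \<in> ?H" using addH[OF W'H[of w 0] KH[OF wb(4)]] wb(3) True by simp
      then have "v \<in> ?U" using wb c1 by (auto intro!: image_eqI[of _ _ "w + k"])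
      then show ?thesis by (simp add: hull_inc)
    next
      case False
      then have bpos: "0 < b" using b0 by simp
      have "((1/b) *\<^sub>R w, 1) \<in> ?W'"
      proof
        fix \<nu> assume \<nu>: "\<nu> \<in> ?S"
        have wbn: "(w, b) \<in> Hn m \<nu>" using wb(3) \<nu> by blast
        have "0 \<le> 1/b" using bpos by simp
        then have "(1/b) *\<^sub>R (w, b) \<in> Hn m \<nu>" by (rule convex_cone_scaleR[OF ccW'[OF \<nu>] _ wbn])
        then show "((1/b) *\<^sub>R w, 1) \<in> Hn m \<nu>" using bpos by simp
      qed
      moreover have "((1/b) *\<^sub>R k, 0) \<in> ?H" using sclH[OF KH[OF wb(4)], of "1/b"] bpos by simp
      ultimately have x1: "(1/b) *\<^sub>R w + (1/b) *\<^sub>R k \<in> ?V" by blast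
      have "v = b *\<^sub>R ((1/b) *\<^sub>R w + (1/b) *\<^sub>R k) + c *\<^sub>R (- ?x)"
        using wb bpos by (simp add: algebra_simps)
      moreover have "b *\<^sub>R ((1/b) *\<^sub>R w + (1/b) *\<^sub>R k) + c *\<^sub>R (- ?x) \<in> convex hull (?U \<union> ?V)"
        apply (rule convexD[OF convex_convex_hull])
            apply (rule hull_inc, rule UnI2, rule x1)
           apply (rule hull_inc, rule UnI1, rule xU)
        using b0 wb by simp_all
      ultimately show ?thesis by simp
    qed
  qed
qed


lemma K_absorb: "\<exists>x. x *\<^sub>R axis j 1 + u \<in> Kcone rate t \<omega>"
proof -
  let ?K = "Kcone rate t \<omega>"
  define p where "p = (\<lambda>i. max (u $ i) 0)"
  define n where "n = (\<lambda>i. max (- (u $ i)) 0)"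
  have g1: "axis i 1 \<in> ?K" for i unfolding Kcone_def by (rule hull_inc) auto
  have g2: "rate t \<omega> j i *\<^sub>R axis j 1 - axis i 1 \<in> ?K" for i unfolding Kcone_def by (rule hull_inc) auto
  define z where "z = (\<Sum>i\<in>UNIV. p i *\<^sub>R axis i 1 + n i *\<^sub>R (rate t \<omega> j i *\<^sub>R axis j 1 - axis i (1::real)))"
  have "z \<in> ?K" unfolding z_def
  proof (rule convex_cone_sum_mem[OF Kcone_cc])
    show "finite (UNIV :: 'd set)" by simp
    fix i
    show "p i *\<^sub>R axis i 1 + n i *\<^sub>R (rate t \<omega> j i *\<^sub>R axis j 1 - axis i 1) \<in> ?K"
      by (rule convex_cone_add[OF Kcone_cc convex_cone_scaleR[OF Kcone_cc _ g1] convex_cone_scaleR[OF Kcone_cc _ g2]])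
         (simp_all add: p_def n_def)
  qed
  moreover have "z = (\<Sum>i\<in>UNIV. n i * rate t \<omega> j i) *\<^sub>R axis j 1 + u"
  proof (subst vec_eq_iff, intro allI)
    fix k
    have pn: "p k - n k = u $ k" unfolding p_def n_def by auto
    have "z $ k = (\<Sum>i\<in>UNIV. p i * axis i 1 $ k + n i * (rate t \<omega> j i * axis j 1 $ k - axis i 1 $ k))"
      unfolding z_def by simp
    also have "\<dots> = (\<Sum>i\<in>UNIV. (if k = i then p i - n i else 0) + n i * rate t \<omega> j i * axis j 1 $ k)"
      by (rule sum.cong) (auto simp: axis_def algebra_simps)
    also have "\<dots> = u $ k + (\<Sum>i\<in>UNIV. n i * rate t \<omega> j i) * axis j 1 $ k"
      by (simp add: sum.distrib pn sum_distrib_right)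
    finally show "z $ k = ((\<Sum>i\<in>UNIV. n i * rate t \<omega> j i) *\<^sub>R axis j 1 + u) $ k" by simp
  qed
  ultimately show ?thesis by auto
qed

lemma root_mem: "n \<le> T \<Longrightarrow> \<mu> \<in> F (T - n) \<Longrightarrow> k \<in> Kn (T - n) \<mu> \<Longrightarrow> (k - nodeval (xi (T - n)) \<mu>, 1) \<in> Hn n \<mu>"
proof (cases n)
  case 0
  assume "k \<in> Kn (T - n) \<mu>"
  then show ?thesis unfolding 0 Hn.simps by (intro CollectI exI[of _ k] exI[of _ "1::real"]) simp
next
  case (Suc m)
  assume a: "n \<le> T" "\<mu> \<in> F (T - n)" "k \<in> Kn (T - n) \<mu>"
  have tt: "T - m = Suc (T - Suc m)" "T - Suc m < T" using a(1) Suc by auto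
  have "(0, 0) \<in> (\<Inter>\<nu>\<in>succ_nodes F (T - Suc m) \<mu>. Hn m \<nu>)"
  proof
    fix \<nu> assume "\<nu> \<in> succ_nodes F (T - Suc m) \<mu>"
    then have "\<nu> \<in> F (T - m)" unfolding tt succ_nodes_def by auto
    then show "(0, 0) \<in> Hn m \<nu>" using Hn_zero[of m \<nu>] a(1) Suc by simp
  qed
  then show ?thesis unfolding Suc Hn.simps
    by (intro CollectI exI[of _ 0] exI[of _ 0] exI[of _ k] exI[of _ "1::real"]) (use a Suc in simp)
qed

lemma Omega_F0: "Omega \<in> F (T - T)" using F0 by simp

lemma cell0: "\<omega> \<in> Omega \<Longrightarrow> cell 0 \<omega> = Omega"
  using cell_eq[of 0 Omega \<omega>] F0 by simp

lemma Z0_eq: "Z0 Omega F T rate xi = {v. (v, 1) \<in> Hn T Omega}"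
  unfolding Z0_def using Z_char[OF le_refl Omega_F0] .

lemma init_const: "measurable_at (F 0) f \<Longrightarrow> \<omega> \<in> Omega \<Longrightarrow> f \<omega> = init Omega (\<lambda>s. f)"
proof -
  assume a: "measurable_at (F 0) f" "\<omega> \<in> Omega"
  have s: "(SOME \<omega>. \<omega> \<in> Omega) \<in> Omega" using a(2) by (rule someI)
  have "Omega \<in> F 0" using F0 by simp
  then have "f \<omega> = f (SOME \<omega>. \<omega> \<in> Omega)" by (rule meas_eq[OF a(1) _ a(2) s])
  then show ?thesis unfolding init_def by simp
qed

lemma Phi_strat: "(y, ch) \<in> Phi_bg Omega F T rate xi \<longleftrightarrow> strat 0 (\<lambda>_. init Omega y) (\<lambda>_. 1) y ch"
proof
  assume "(y, ch) \<in> Phi_bg Omega F T rate xi"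
  then have S: "is_strategy Omega F T y" "is_mixed_stopping_time Omega F T ch"
    "\<forall>t\<le>T. \<forall>\<omega>\<in>Omega. y t \<omega> + ch t \<omega> *\<^sub>R xi t \<omega> - y (t+1) \<omega> \<in> Kcone rate t \<omega>"
    unfolding Phi_bg_def by auto
  have y0: "\<forall>\<omega>\<in>Omega. y 0 \<omega> = init Omega y"
  proof
    fix \<omega> assume "\<omega> \<in> Omega"
    moreover have "measurable_at (F 0) (y 0)" using S(1) unfolding is_strategy_def by blast
    ultimately have "y 0 \<omega> = init Omega (\<lambda>s. y 0)" by (rule init_const[rotated])
    then show "y 0 \<omega> = init Omega y" unfolding init_def by simp
  qed
  show "strat 0 (\<lambda>_. init Omega y) (\<lambda>_. 1) y ch"
    unfolding strat_def
  proof (intro conjI)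
    show "\<forall>\<omega>\<in>Omega. y 0 \<omega> = init Omega y" by (rule y0)
    show "\<forall>s\<in>{Suc 0..Suc T}. measurable_at (F (s - 1)) (y s)"
      using S(1) unfolding is_strategy_def by simp
    show "\<forall>\<omega>\<in>Omega. y (Suc T) \<omega> = 0" using S(1) unfolding is_strategy_def by simp
    show "\<forall>s\<in>{0..T}. measurable_at (F s) (ch s) \<and> (\<forall>\<omega>\<in>Omega. 0 \<le> ch s \<omega>)"
      using S(2) unfolding is_mixed_stopping_time_def by simp
    show "\<forall>\<omega>\<in>Omega. (\<Sum>s=0..T. ch s \<omega>) = 1"
      using S(2) unfolding is_mixed_stopping_time_def by (simp add: atLeast0AtMost)
    show "\<forall>s\<in>{0..T}. \<forall>\<omega>\<in>Omega. y s \<omega> + ch s \<omega> *\<^sub>R xi s \<omega> - y (Suc s) \<omega> \<in> Kcone rate s \<omega>"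
      using S(3) by simp
  qed
next
  assume st: "strat 0 (\<lambda>_. init Omega y) (\<lambda>_. 1) y ch"
  have "is_strategy Omega F T y"
    unfolding is_strategy_def
  proof (intro conjI)
    show "measurable_at (F 0) (y 0)"
      by (rule meas_cong[OF le0 meas_const[of _ "init Omega y"]]) (use strat_D(1)[OF st] in simp)
    show "\<forall>t\<in>{1..T + 1}. measurable_at (F (t - 1)) (y t)" using st unfolding strat_def by simp
    show "\<forall>\<omega>\<in>Omega. y (T + 1) \<omega> = 0" using strat_D(2)[OF st] by simp
  qed
  moreover have "is_mixed_stopping_time Omega F T ch"
    unfolding is_mixed_stopping_time_def
  proof (intro conjI allI impI ballI)
    fix t \<omega> assume t: "t \<le> T" and \<omega>: "\<omega> \<in> Omega"
    show "0 \<le> ch t \<omega>" using strat_Ds(1)[OF st le0 t \<omega>] .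
    have "ch t \<omega> \<le> (\<Sum>s=0..T. ch s \<omega>)"
      by (rule member_le_sum) (use strat_Ds(1)[OF st le0 _ \<omega>] t in auto)
    then show "ch t \<omega> \<le> 1" using strat_D(3)[OF st \<omega>] by simp
  next
    fix t assume t: "t \<le> T"
    show "measurable_at (F t) (ch t)" using strat_Ds(2)[OF st le0 t] .
  next
    fix \<omega> assume \<omega>: "\<omega> \<in> Omega"
    show "(\<Sum>t\<le>T. ch t \<omega>) = 1" using strat_D(3)[OF st \<omega>] by (simp add: atLeast0AtMost)
  qed
  moreover have "\<forall>t\<le>T. \<forall>\<omega>\<in>Omega. y t \<omega> + ch t \<omega> *\<^sub>R xi t \<omega> - y (t+1) \<omega> \<in> Kcone rate t \<omega>"
    using strat_Ds(3)[OF st le0] by simp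
  ultimately show "(y, ch) \<in> Phi_bg Omega F T rate xi" unfolding Phi_bg_def by simp
qed

lemma Phi_eq: "{x. \<exists>(y, ch)\<in>Phi_bg Omega F T rate xi. x = init Omega y} = {v. (v, 1) \<in> Hn T Omega}"
proof (intro set_eqI iffI)
  fix v assume "v \<in> {x. \<exists>(y, ch)\<in>Phi_bg Omega F T rate xi. x = init Omega y}"
  then obtain y ch where yc: "(y, ch) \<in> Phi_bg Omega F T rate xi" "v = init Omega y" by auto
  then have st: "strat (T - T) (\<lambda>_. v) (\<lambda>_. 1) y ch" using Phi_strat by simp
  obtain \<omega> where \<omega>: "\<omega> \<in> Omega" using ne by auto
  have "(v, 1) \<in> Hn T (cell (T - T) \<omega>)"
    by (rule H_of_strat[of T "\<lambda>_. 1" "\<lambda>_. v" y ch \<omega>]) (use st \<omega> meas_const in simp_all)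
  then show "v \<in> {v. (v, 1) \<in> Hn T Omega}" using cell0[OF \<omega>] by simp
next
  fix v assume "v \<in> {v. (v, 1) \<in> Hn T Omega}"
  then have "\<forall>\<omega>\<in>Omega. ((\<lambda>_. v) \<omega>, (\<lambda>_. 1::real) \<omega>) \<in> Hn T (cell (T - T) \<omega>)" using cell0 by simp
  then obtain y ch where st: "strat (T - T) (\<lambda>_. v) (\<lambda>_. 1) y ch"
    using strat_of_H[OF le_refl meas_const meas_const] by blast
  obtain \<omega> where \<omega>: "\<omega> \<in> Omega" using ne by auto
  have iy: "init Omega y = v" using strat_D(1)[OF st \<omega>] unfolding init_def
    using someI[of "\<lambda>\<omega>. \<omega> \<in> Omega", OF \<omega>] strat_D(1)[OF st] by simp
  then have "(y, ch) \<in> Phi_bg Omega F T rate xi" using Phi_strat st by simp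
  then show "v \<in> {x. \<exists>(y, ch)\<in>Phi_bg Omega F T rate xi. x = init Omega y}" using iy by auto
qed


lemma meas_addc: "measurable_at G f \<Longrightarrow> measurable_at G (\<lambda>\<omega>. f \<omega> + c)"
  unfolding measurable_at_def by metis

lemma no_arb_H:
  assumes NA: "no_arbitrage Omega F T rate TYPE('d)"
  shows "(- axis j 1, 0) \<notin> Hn T Omega"
proof
  assume h: "(- axis j 1, 0) \<in> Hn T Omega"
  define e where "e = axis j (1::real)"
  have "\<forall>\<omega>\<in>Omega. ((\<lambda>_. - e) \<omega>, (\<lambda>_. 0::real) \<omega>) \<in> Hn T (cell (T - T) \<omega>)" using h cell0 unfolding e_def by simp
  then obtain y ch where st: "strat (T - T) (\<lambda>_. - e) (\<lambda>_. 0) y ch"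
    using strat_of_H[OF le_refl meas_const meas_const] by blast
  then have st: "strat 0 (\<lambda>_. - e) (\<lambda>_. 0) y ch" by simp
  have ch0: "ch s \<omega> = 0" if "\<omega> \<in> Omega" "s \<le> T" for s \<omega>
  proof -
    have "(\<Sum>s=0..T. ch s \<omega>) = 0" using strat_D(3)[OF st that(1)] by simp
    moreover have "\<forall>s\<in>{0..T}. 0 \<le> ch s \<omega>" using strat_Ds(1)[OF st _ _ that(1)] by auto
    ultimately have "\<forall>s\<in>{0..T}. ch s \<omega> = 0" using sum_nonneg_eq_0_iff[of "{0..T}" "\<lambda>s. ch s \<omega>"] by auto
    then show ?thesis using that by auto
  qed
  define y' where "y' = (\<lambda>s \<omega>. if s \<le> T then y s \<omega> + e else 0)"
  define x where "x = (\<lambda>\<omega>::'w. e)"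
  obtain \<omega>0 where \<omega>0: "\<omega>0 \<in> Omega" using ne by auto
  have isy: "is_strategy Omega F T y'"
    unfolding is_strategy_def
  proof (intro conjI)
    have "\<forall>\<omega>\<in>Omega. y' 0 \<omega> = 0" using strat_D(1)[OF st] by (simp add: y'_def)
    then show "measurable_at (F 0) (y' 0)" by (rule meas_cong[OF le0 meas_const])
    show "\<forall>t\<in>{1..T + 1}. measurable_at (F (t - 1)) (y' t)"
    proof
      fix t assume t: "t \<in> {1..T + 1}"
      show "measurable_at (F (t - 1)) (y' t)"
      proof (cases "t \<le> T")
        case True
        have "Suc (t - 1) = t" using t by auto
        then have "measurable_at (F (t - 1)) (y t)" using strat_D7[OF st le0, of "t - 1"] True by simp
        then show ?thesis unfolding y'_def using True by (simp add: meas_addc)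
      next
        case False then show ?thesis unfolding y'_def by (simp add: meas_const)
      qed
    qed
    show "\<forall>\<omega>\<in>Omega. y' (T + 1) \<omega> = 0" by (simp add: y'_def)
  qed
  have "(SOME \<omega>. \<omega> \<in> Omega) \<in> Omega" using \<omega>0 by (rule someI)
  then have iy: "init Omega y' = 0" unfolding init_def y'_def using strat_D(1)[OF st] by simp
  have Kt: "\<forall>t<T. \<forall>\<omega>\<in>Omega. y' t \<omega> - y' (t + 1) \<omega> \<in> Kcone rate t \<omega>"
  proof (intro allI impI ballI)
    fix t \<omega> assume t: "t < T" and \<omega>: "\<omega> \<in> Omega"
    have "y t \<omega> + ch t \<omega> *\<^sub>R xi t \<omega> - y (Suc t) \<omega> \<in> Kcone rate t \<omega>"
      using strat_Ds(3)[OF st le0 _ \<omega>] t by simp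
    then show "y' t \<omega> - y' (t + 1) \<omega> \<in> Kcone rate t \<omega>" using ch0[OF \<omega>] t by (simp add: y'_def)
  qed
  have KT: "\<forall>\<omega>\<in>Omega. y' T \<omega> - x \<omega> \<in> Kcone rate T \<omega>"
  proof
    fix \<omega> assume \<omega>: "\<omega> \<in> Omega"
    have "y T \<omega> + ch T \<omega> *\<^sub>R xi T \<omega> - y (Suc T) \<omega> \<in> Kcone rate T \<omega>"
      using strat_Ds(3)[OF st le0 le_refl \<omega>] .
    then show "y' T \<omega> - x \<omega> \<in> Kcone rate T \<omega>" using ch0[OF \<omega> le_refl] strat_D(2)[OF st \<omega>]
      by (simp add: y'_def x_def)
  qed
  have "measurable_at (F T) x" unfolding x_def by (rule meas_const)
  moreover have "\<forall>\<omega>\<in>Omega. \<forall>i. 0 \<le> x \<omega> $ i" unfolding x_def e_def by (simp add: axis_def)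
  moreover have "\<exists>\<omega>\<in>Omega. x \<omega> \<noteq> 0" using \<omega>0 unfolding x_def e_def by auto
  ultimately show False using NA isy iy Kt KT unfolding no_arbitrage_def by blast
qed

end

theorem theorem5p3:
  fixes Omega :: "'w set" and F :: "nat \<Rightarrow> 'w set set" and T :: nat
    and P :: "'w \<Rightarrow> real"
    and rate :: "nat \<Rightarrow> 'w \<Rightarrow> 'd::finite \<Rightarrow> 'd \<Rightarrow> real"
    and xi :: "nat \<Rightarrow> 'w \<Rightarrow> real^'d"
  assumes fin: "finite Omega" and ne: "Omega \<noteq> {}"
    and P_pos: "\<forall>\<omega>\<in>Omega. P \<omega> > 0" and P_sum: "(\<Sum>\<omega>\<in>Omega. P \<omega>) = 1"
    and part: "\<forall>t\<le>T. partition_on Omega (F t)"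
    and refine: "\<forall>t<T. \<forall>\<nu>\<in>F (Suc t). \<exists>\<mu>\<in>F t. \<nu> \<subseteq> \<mu>"
    and F0: "F 0 = {Omega}"
    and FT: "F T = {{\<omega>} | \<omega>. \<omega> \<in> Omega}"
    and rate_adapted: "\<forall>t\<le>T. measurable_at (F t) (rate t)"
    and rate_pos: "\<forall>t\<le>T. \<forall>\<omega>\<in>Omega. \<forall>j k. rate t \<omega> j k > 0"
    and rate_diag: "\<forall>t\<le>T. \<forall>\<omega>\<in>Omega. \<forall>j. rate t \<omega> j j = 1"
    and NA: "no_arbitrage Omega F T rate TYPE('d)"
    and xi_adapted: "\<forall>t\<le>T. measurable_at (F t) (xi t)"
  shows "Z0 Omega F T rate xi = {x. \<exists>(y, ch)\<in>Phi_bg Omega F T rate xi. x = init Omega y}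
    \<and> (\<forall>j. bid_price Omega F T rate xi j \<in> {- x | x. x *\<^sub>R axis j 1 \<in> Z0 Omega F T rate xi}
           \<and> (\<forall>v\<in>{- x | x. x *\<^sub>R axis j 1 \<in> Z0 Omega F T rate xi}. v \<le> bid_price Omega F T rate xi j))
    \<and> (\<forall>j. \<exists>(y, ch)\<in>Phi_bg Omega F T rate xi. bid_price Omega F T rate xi j *\<^sub>R axis j 1 = - init Omega y)"
proof -
  interpret m: mkt Omega F T rate xi
    using fin ne part refine F0 rate_adapted xi_adapted by unfold_locales auto
  let ?H = "m.Hn T Omega"
  have part1: "Z0 Omega F T rate xi = {x. \<exists>(y, ch)\<in>Phi_bg Omega F T rate xi. x = init Omega y}"
    using m.Z0_eq m.Phi_eq by simp
  have clH: "closed ?H" by (rule fg_closed[OF m.Hn_fg[OF le_refl m.Omega_F0]])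
  have ccH: "convex_cone ?H" by (rule m.Hn_cc[OF le_refl m.Omega_F0])
  have main: "bid_price Omega F T rate xi j \<in> {- x | x. x *\<^sub>R axis j 1 \<in> Z0 Omega F T rate xi}
           \<and> (\<forall>v\<in>{- x | x. x *\<^sub>R axis j 1 \<in> Z0 Omega F T rate xi}. v \<le> bid_price Omega F T rate xi j)" for j
  proof -
    define e where "e = axis j (1::real)"
    define S where "S = {- x | x. x *\<^sub>R axis j 1 \<in> Z0 Omega F T rate xi}"
    have bid: "bid_price Omega F T rate xi j = Sup S"
    proof -
      have "{- x | x. \<exists>(y, ch)\<in>Phi_bg Omega F T rate xi. x *\<^sub>R axis j 1 = init Omega y} = S"
        unfolding S_def part1 by blast
      then show ?thesis unfolding bid_price_def by simp
    qed
    have S_eq: "S = (\<lambda>v. (- v *\<^sub>R e, 1::real)) -` ?H"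
    proof (intro set_eqI iffI)
      fix v assume "v \<in> S"
      then obtain x where "v = - x" "(x *\<^sub>R e, 1) \<in> ?H" unfolding S_def m.Z0_eq e_def by blast
      then show "v \<in> (\<lambda>v. (- v *\<^sub>R e, 1::real)) -` ?H" by simp
    next
      fix v assume "v \<in> (\<lambda>v. (- v *\<^sub>R e, 1::real)) -` ?H"
      then have "(- v) *\<^sub>R axis j 1 \<in> Z0 Omega F T rate xi" unfolding m.Z0_eq e_def by simp
      then show "v \<in> S" unfolding S_def by (intro CollectI exI[of _ "- v"]) simp
    qed
    have clS: "closed S" unfolding S_eq
      by (rule continuous_closed_vimage[OF clH]) (intro continuous_intros)
    obtain \<omega>0 where \<omega>0: "\<omega>0 \<in> Omega" using ne by auto
    obtain x where x: "x *\<^sub>R e + nodeval (xi 0) Omega \<in> Kcone rate 0 \<omega>0" using m.K_absorb[of j "nodeval (xi 0) Omega" 0 \<omega>0] unfolding e_def by blast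
    have "x *\<^sub>R e + nodeval (xi 0) Omega \<in> m.Kn (T - T) Omega"
      using x m.Kn_eq[of 0 Omega \<omega>0] F0 \<omega>0 by simp
    from m.root_mem[OF le_refl m.Omega_F0 this] have "(x *\<^sub>R e, 1) \<in> ?H" by simp
    then have "- x \<in> S" unfolding S_eq by simp
    then have Sne: "S \<noteq> {}" by auto
    have nH: "(- e, 0) \<notin> ?H" using m.no_arb_H[OF NA] unfolding e_def .
    have "open (- ?H)" using clH by (simp add: open_Compl)
    then obtain \<epsilon> where \<epsilon>: "\<epsilon> > 0" "ball (- e, 0) \<epsilon> \<subseteq> - ?H"
      using nH open_contains_ball by blast
    have bd: "v \<le> 1 / \<epsilon>" if v: "v \<in> S" for v
    proof (rule ccontr)
      assume "\<not> v \<le> 1 / \<epsilon>"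
      then have vg: "v > 1 / \<epsilon>" by simp
      then have vpos: "v > 0" using \<epsilon> by (smt (verit) divide_pos_pos)
      have vH: "(- v *\<^sub>R e, 1) \<in> ?H" using v unfolding S_eq by simp
      have "0 \<le> 1 / v" using vpos by simp
      then have "(1 / v) *\<^sub>R (- v *\<^sub>R e, 1::real) \<in> ?H" by (rule convex_cone_scaleR[OF ccH _ vH])
      then have inH: "(- e, 1 / v) \<in> ?H" using vpos by simp
      have "1 / v < \<epsilon>" using vg vpos \<epsilon> by (simp add: field_simps)
      then have "dist (- e, 0::real) (- e, 1 / v) < \<epsilon>" using vpos by (simp add: dist_Pair_Pair)
      then have "(- e, 1 / v) \<in> - ?H" using \<epsilon>(2) by auto
      then show False using inH by simp
    qed
    then have bdd: "bdd_above S" by (rule bdd_aboveI[where M="1 / \<epsilon>"])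
    have "Sup S \<in> S" by (rule closed_contains_Sup[OF Sne bdd clS])
    moreover have "\<forall>v\<in>S. v \<le> Sup S" using cSup_upper bdd by blast
    ultimately show ?thesis unfolding bid S_def by simp
  qed
  have part3: "\<exists>(y, ch)\<in>Phi_bg Omega F T rate xi. bid_price Omega F T rate xi j *\<^sub>R axis j 1 = - init Omega y" for j
  proof -
    obtain x where x: "bid_price Omega F T rate xi j = - x" "x *\<^sub>R axis j 1 \<in> Z0 Omega F T rate xi"
      using main[of j] by blast
    then obtain y ch where "(y, ch) \<in> Phi_bg Omega F T rate xi" "x *\<^sub>R axis j 1 = init Omega y"
      unfolding part1 by blast
    then show ?thesis using x(1) by auto
  qed
  show ?thesis using part1 main part3 by blast
qed


end
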